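(* In the connectivity graph model, any shape $S$ on $n$ nodes can be grown from $i(S)$ (as initial shape) in $O(\log n)$ time steps.
   Context: Shapes. Grid points are integer pairs $(x,y)$; two grid points are adjacent if they are at orthogonal (Manhattan) distance $1$. A shape $S=(V,E)$ is a finite connected graph whose nodes occupy distinct grid points and whose edges join only pairs of nodes occupying adjacent points; shapes are considered up to translation, and $n=|V|$. Growth operations. One node, the anchor $u_0$, is stationary; other nodes move relative to it, and a tree is rooted at $u_0$. A growth operation on a node $u$ toward an adjacent grid point $p$ either (i) if $u$ has no edge to $p$, creates a new node $u'$ at $p$ with edge $uu'$; or (ii) if $p$ is occupied by a node $v$ with $uv\in E$, creates a new node $u'$ at $p$, replaces edge $uv$ by edges $uu',u'v$, and translates by one unit, along the axis of $uv$, the part of the (rooted spanning) tree hanging from whichever of $u,v$ is farther from $u_0$, away from the other endpoint. In one time step a set of operations is applied concurrently, each node receiving at most one operation and all operations having the same cardinal direction; the displacement of each node is the sum of the unit vectors contributed by the operations on its path to $u_0$ in a spanning tree rooted at $u_0$. The set is collision-free if no two nodes collide during these motions or end at the same point, and for every cycle and every two of its nodes the displacements accumulated along the two paths of the cycle between them are equal. Growth processes (connectivity graph model). A growth process from an initial shape $S_0$ performs time steps $t=1,2,\dots$, each applying a collision-free set of growth operations to the current shape; no edges are deleted and no edges are created other than by the operations. It grows $S$ from $S_0$ in $t_f$ time steps if the shape obtained after step $t_f$ is $S$. Turning points, compression. A node $u$ is a turning point of $S$ if $u$ is a leaf or $u$ has two neighbors $v_1,v_2$ with $v_1u$ perpendicular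 to $uv_2$. A line segment is a maximal straight path between two turning points containing no other turning point. A column (row) of $S$ is compressible if it contains nodes of $S$ but no turning point. Compressing a maximal run $C_l,\dots,C_r$ of consecutive compressible columns deletes their nodes, shifts everything right of $C_r$ left by $r-l+1$, and, for each horizontal segment through them, joins its node in column $C_{l-1}$ to its node in column $C_{r+1}$; rows analogously. $i(S)$ is the incompressible shape obtained by compressing all compressible columns and rows of $S$. *)

theory Defs
  imports Main Complex_Main
begin

type_synonym pt = "int \<times> int"

text \<open>A shape is represented by the set of occupied grid points (nodes are identified
with the grid point they occupy, as nodes occupy distinct points) and the set of its
edges, each edge being a two-element set of points.\<close>
type_synonym shape = "pt set \<times> pt set set"

definition padd :: "pt \<Rightarrow> pt \<Rightarrow> pt" where
  "padd p q = (fst p + fst q, snd p + snd q)"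

definition pneg :: "pt \<Rightarrow> pt" where
  "pneg p = (- fst p, - snd p)"

definition grid_adj :: "pt \<Rightarrow> pt \<Rightarrow> bool" where
  "grid_adj p q \<longleftrightarrow> \<bar>fst p - fst q\<bar> + \<bar>snd p - snd q\<bar> = 1"

definition nodes :: "shape \<Rightarrow> pt set" where "nodes S = fst S"
definition edges :: "shape \<Rightarrow> pt set set" where "edges S = snd S"

definition is_shape :: "shape \<Rightarrow> bool" where
  "is_shape S \<longleftrightarrow>
     finite (nodes S) \<and> nodes S \<noteq> {} \<and>
     (\<forall>e\<in>edges S. \<exists>p q. e = {p, q} \<and> p \<in> nodes S \<and> q \<in> nodes S \<and> grid_adj p q) \<and>
     (\<forall>p\<in>nodes S. \<forall>q\<in>nodes S. (p, q) \<in> {(a, b). {a, b} \<in> edges S}\<^sup>*)"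

definition translate :: "pt \<Rightarrow> shape \<Rightarrow> shape" where
  "translate t S = (padd t ` nodes S, (\<lambda>e. padd t ` e) ` edges S)"

definition same_shape :: "shape \<Rightarrow> shape \<Rightarrow> bool" where
  "same_shape S T \<longleftrightarrow> (\<exists>t. T = translate t S)"

definition cardinal_dirs :: "pt set" where
  "cardinal_dirs = {(1, 0), (-1, 0), (0, 1), (0, -1)}"

text \<open>An operation on u in direction d is of type (ii) (it elongates the edge from u to
  u + d) iff u carries an operation and has an edge to u + d; otherwise it is of type (i).\<close>
definition elong :: "shape \<Rightarrow> pt set \<Rightarrow> pt \<Rightarrow> pt \<Rightarrow> pt \<Rightarrow> bool" where
  "elong S Ops d u v \<longleftrightarrow> u \<in> Ops \<and> v = padd u d \<and> {u, v} \<in> edges S"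

text \<open>Displacements: the anchor is stationary and, along every edge, the displacement
  difference is the unit vector contributed by the (possible) elongation of that edge
  (this is the tree-based definition together with the cycle-consistency requirement).\<close>
definition valid_disp :: "shape \<Rightarrow> pt set \<Rightarrow> pt \<Rightarrow> pt \<Rightarrow> (pt \<Rightarrow> pt) \<Rightarrow> bool" where
  "valid_disp S Ops d u0 disp \<longleftrightarrow>
     u0 \<in> nodes S \<and> disp u0 = (0, 0) \<and>
     (\<forall>u\<in>nodes S. \<forall>v\<in>nodes S. {u, v} \<in> edges S \<longrightarrow>
        padd (disp v) (pneg (disp u)) =
          (if elong S Ops d u v then d else if elong S Ops d v u then pneg d else (0, 0)))"

text \<open>Trajectories during the motion, for time \<tau> in [0,1]: an existing node a moves
  linearly by its displacement; the node created by the operation on u moves from u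
  to its final position (one unit from the final position of u in direction d).\<close>
definition traj :: "(pt \<Rightarrow> pt) \<Rightarrow> pt \<Rightarrow> pt + pt \<Rightarrow> real \<Rightarrow> real \<times> real" where
  "traj disp d x \<tau> = (case x of
      Inl a \<Rightarrow> (of_int (fst a) + \<tau> * of_int (fst (disp a)),
                of_int (snd a) + \<tau> * of_int (snd (disp a)))
    | Inr u \<Rightarrow> (of_int (fst u) + \<tau> * of_int (fst (disp u) + fst d),
                of_int (snd u) + \<tau> * of_int (snd (disp u) + snd d)))"

definition collision_free :: "shape \<Rightarrow> pt set \<Rightarrow> pt \<Rightarrow> (pt \<Rightarrow> pt) \<Rightarrow> bool" where
  "collision_free S Ops d disp \<longleftrightarrow>
     (\<forall>\<tau>::real. 0 < \<tau> \<and> \<tau> \<le> 1 \<longrightarrow>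
        inj_on (\<lambda>x. traj disp d x \<tau>) (Inl ` nodes S \<union> Inr ` Ops))"

definition step_result :: "shape \<Rightarrow> pt set \<Rightarrow> pt \<Rightarrow> (pt \<Rightarrow> pt) \<Rightarrow> shape" where
  "step_result S Ops d disp =
     (let f = (\<lambda>a. padd a (disp a)); nw = (\<lambda>u. padd (f u) d) in
      ((f ` nodes S) \<union> (nw ` Ops),
       {{f u, f v} | u v. u \<in> nodes S \<and> v \<in> nodes S \<and> {u, v} \<in> edges S \<and>
                          \<not> elong S Ops d u v \<and> \<not> elong S Ops d v u}
       \<union> {{f u, nw u} | u. u \<in> Ops}
       \<union> {{nw u, f (padd u d)} | u. u \<in> Ops \<and> {u, padd u d} \<in> edges S}))"

definition growth_step :: "shape \<Rightarrow> shape \<Rightarrow> bool" where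
  "growth_step S S' \<longleftrightarrow>
     (\<exists>Ops d u0 disp. Ops \<subseteq> nodes S \<and> d \<in> cardinal_dirs \<and>
        valid_disp S Ops d u0 disp \<and> collision_free S Ops d disp \<and>
        S' = step_result S Ops d disp)"

definition grows_in :: "shape \<Rightarrow> shape \<Rightarrow> nat \<Rightarrow> bool" where
  "grows_in S0 S tf \<longleftrightarrow>
     (\<exists>seq :: nat \<Rightarrow> shape. seq 0 = S0 \<and>
        (\<forall>k<tf. growth_step (seq k) (seq (Suc k))) \<and> same_shape (seq tf) S)"

definition nbrs :: "shape \<Rightarrow> pt \<Rightarrow> pt set" where
  "nbrs S u = {v. {u, v} \<in> edges S}"

definition turning_point :: "shape \<Rightarrow> pt \<Rightarrow> bool" where
  "turning_point S u \<longleftrightarrow> u \<in> nodes S \<and>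
     (card (nbrs S u) = 1 \<or>
      (\<exists>v1\<in>nbrs S u. \<exists>v2\<in>nbrs S u.
         (fst v1 - fst u) * (fst v2 - fst u) + (snd v1 - snd u) * (snd v2 - snd u) = 0))"

definition compressible_col :: "shape \<Rightarrow> int \<Rightarrow> bool" where
  "compressible_col S x \<longleftrightarrow>
     (\<exists>y. (x, y) \<in> nodes S) \<and> (\<forall>y. (x, y) \<in> nodes S \<longrightarrow> \<not> turning_point S (x, y))"

text \<open>Compressing all compressible columns at once: nodes in compressible columns are
  deleted, each column is shifted left by the number of deleted columns to its left, and
  horizontal segments running through deleted columns are rejoined.\<close>
definition col_shift :: "shape \<Rightarrow> pt \<Rightarrow> pt" where
  "col_shift S p = (fst p - int (card {c. c < fst p \<and> compressible_col S c}), snd p)"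

definition compress_cols :: "shape \<Rightarrow> shape" where
  "compress_cols S =
     (let K = {p \<in> nodes S. \<not> compressible_col S (fst p)} in
      (col_shift S ` K,
       {{col_shift S a, col_shift S b} | a b. a \<in> K \<and> b \<in> K \<and>
          ({a, b} \<in> edges S \<or>
           (snd a = snd b \<and> fst a < fst b \<and>
            (\<forall>x. fst a \<le> x \<and> x < fst b \<longrightarrow> {(x, snd a), (x + 1, snd a)} \<in> edges S) \<and>
            (\<forall>x. fst a < x \<and> x < fst b \<longrightarrow> compressible_col S x)))}))"

definition swap_shape :: "shape \<Rightarrow> shape" where
  "swap_shape S = (prod.swap ` nodes S, (\<lambda>e. prod.swap ` e) ` edges S)"

definition compress_rows :: "shape \<Rightarrow> shape" where
  "compress_rows S = swap_shape (compress_cols (swap_shape S))"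

definition incompressible_of :: "shape \<Rightarrow> shape" where
  "incompressible_of S = compress_rows (compress_cols S)"

end

theory Submission
  imports Defs
begin

definition good :: "shape \<Rightarrow> bool" where
  "good S \<longleftrightarrow> finite (nodes S) \<and> nodes S \<noteq> {} \<and>
     (\<forall>e\<in>edges S. \<exists>p q. e = {p, q} \<and> p \<in> nodes S \<and> q \<in> nodes S \<and> grid_adj p q) \<and>
     (\<forall>p\<in>nodes S. \<exists>q. {p, q} \<in> edges S)"

definition sig :: "int set \<Rightarrow> int \<Rightarrow> int" where
  "sig D x = x - int (card {c\<in>D. c < x})"

definition sh :: "int set \<Rightarrow> pt \<Rightarrow> pt" where
  "sh D p = (sig D (fst p), snd p)"

definition pathD :: "shape \<Rightarrow> int set \<Rightarrow> pt \<Rightarrow> pt \<Rightarrow> bool" where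
  "pathD S D a b \<longleftrightarrow> snd a = snd b \<and> fst a < fst b \<and>
     (\<forall>x. fst a \<le> x \<and> x < fst b \<longrightarrow> {(x, snd a), (x + 1, snd a)} \<in> edges S) \<and>
     (\<forall>x. fst a < x \<and> x < fst b \<longrightarrow> x \<in> D)"

definition del :: "shape \<Rightarrow> int set \<Rightarrow> shape" where
  "del S D = (let K = {p \<in> nodes S. fst p \<notin> D} in
      (sh D ` K, {{sh D a, sh D b} | a b. a \<in> K \<and> b \<in> K \<and> ({a, b} \<in> edges S \<or> pathD S D a b)}))"

lemma grid_adj_sym: "grid_adj p q \<Longrightarrow> grid_adj q p"
  by (auto simp: grid_adj_def abs_minus_commute)

lemma grid_adj_cases:
  assumes "grid_adj u v"
  shows "v = (fst u + 1, snd u) \<or> v = (fst u - 1, snd u) \<or> v = (fst u, snd u + 1) \<or> v = (fst u, snd u - 1)"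
proof -
  obtain a b where u: "u = (a,b)" by force
  obtain c e where v: "v = (c,e)" by force
  from assms have "\<bar>a - c\<bar> + \<bar>b - e\<bar> = 1" by (simp add: grid_adj_def u v)
  then have "c = a + 1 \<and> e = b \<or> c = a - 1 \<and> e = b \<or> c = a \<and> e = b + 1 \<or> c = a \<and> e = b - 1"
    by arith
  then show ?thesis by (auto simp: u v)
qed

lemma edge_nodes:
  assumes "good S" "{u, v} \<in> edges S"
  shows "u \<in> nodes S \<and> v \<in> nodes S \<and> grid_adj u v"
proof -
  from assms obtain p q where "{u,v} = {p,q}" "p \<in> nodes S" "q \<in> nodes S" "grid_adj p q"
    unfolding good_def by blast
  then show ?thesis by (auto simp: doubleton_eq_iff intro: grid_adj_sym)
qed

lemma card_lt_split:
  fixes D :: "int set"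
  assumes "finite D" "x1 \<le> x2"
  shows "card {c\<in>D. c < x2} = card {c\<in>D. c < x1} + card (D \<inter> {x1..<x2})"
proof -
  have "{c\<in>D. c < x2} = {c\<in>D. c < x1} \<union> (D \<inter> {x1..<x2})" using assms(2) by fastforce
  moreover have "{c\<in>D. c < x1} \<inter> (D \<inter> {x1..<x2}) = {}" by auto
  ultimately show ?thesis using assms(1) by (simp add: card_Un_disjoint)
qed

lemma sig_diff:
  assumes "finite D" "x1 \<le> x2"
  shows "sig D x2 - sig D x1 = int (card ({x1..<x2} - D))"
proof -
  have c1: "card ({x1..<x2} - D) = card {x1..<x2} - card ({x1..<x2} \<inter> D)"
    by (simp add: card_Diff_subset_Int)
  have c2: "card ({x1..<x2} \<inter> D) \<le> card {x1..<x2}" by (rule card_mono) auto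
  have c3: "int (card {x1..<x2}) = x2 - x1" using assms(2) by simp
  have c4: "int (card ({x1..<x2} - D)) = int (card {x1..<x2}) - int (card ({x1..<x2} \<inter> D))"
    using c1 c2 by simp
  have "D \<inter> {x1..<x2} = {x1..<x2} \<inter> D" by auto
  then have c5: "int (card {c\<in>D. c < x2}) = int (card {c\<in>D. c < x1}) + int (card ({x1..<x2} \<inter> D))"
    using card_lt_split[OF assms] by simp
  show ?thesis using c3 c4 c5 unfolding sig_def by linarith
qed

lemma sig_mono: "finite D \<Longrightarrow> x1 \<le> x2 \<Longrightarrow> sig D x1 \<le> sig D x2"
  using sig_diff[of D x1 x2] by simp

lemma sig_less_iff:
  assumes "finite D" "x \<notin> D"
  shows "sig D x < sig D y \<longleftrightarrow> x < y"
proof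
  assume "sig D x < sig D y"
  then show "x < y" using sig_mono[OF assms(1), of y x] by linarith
next
  assume "x < y"
  then have "x \<in> {x..<y} - D" using assms by auto
  then have "card ({x..<y} - D) > 0" by (auto simp: card_gt_0_iff)
  then show "sig D x < sig D y" using sig_diff[OF assms(1), of x y] \<open>x < y\<close> by simp
qed

lemma sig_step:
  assumes "finite D" "w < z" "w \<notin> D" "\<forall>x. w < x \<and> x < z \<longrightarrow> x \<in> D"
  shows "sig D z = sig D w + 1"
proof -
  have "{w..<z} - D = {w}" using assms by (auto simp: order_le_less)
  then show ?thesis using sig_diff[OF assms(1), of w z] assms(2) by simp
qed

lemma del_nodes: "nodes (del S D) = sh D ` {p \<in> nodes S. fst p \<notin> D}"
  by (simp add: del_def nodes_def Let_def)

lemma del_edges_char: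
  assumes "good S"
  shows "edges (del S D) = {{sh D a, sh D b} | a b. a \<in> nodes S \<and> fst a \<notin> D \<and> b \<in> nodes S \<and> fst b \<notin> D \<and>
      (({a, b} \<in> edges S \<and> fst a = fst b) \<or> pathD S D a b)}" (is "?L = ?R")
proof
  show "?L \<subseteq> ?R"
  proof
    fix e assume "e \<in> ?L"
    then obtain a b where e: "e = {sh D a, sh D b}" and a: "a \<in> nodes S" "fst a \<notin> D"
      and b: "b \<in> nodes S" "fst b \<notin> D" and h: "{a,b} \<in> edges S \<or> pathD S D a b"
      by (auto simp: del_def edges_def Let_def)
    show "e \<in> ?R"
    proof (cases "pathD S D a b")
      case True then show ?thesis using e a b by blast
    next
      case False
      then have ab: "{a,b} \<in> edges S" using h by blast
      then have g: "grid_adj a b" using edge_nodes[OF assms] by blast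
      from grid_adj_cases[OF g] show ?thesis
      proof (elim disjE)
        assume bb: "b = (fst a + 1, snd a)"
        have "pathD S D a b" unfolding pathD_def using ab bb
          by (auto simp: bb)
        then show ?thesis using False by blast
      next
        assume bb: "b = (fst a - 1, snd a)"
        have ed: "{(fst a - 1, snd a), (fst a - 1 + 1, snd a)} \<in> edges S" using ab bb by (simp add: insert_commute)
        have "pathD S D b a" unfolding pathD_def
        proof (intro conjI allI impI)
          fix x assume "fst b \<le> x \<and> x < fst a"
          then have "x = fst a - 1" using bb by auto
          then show "{(x, snd b), (x + 1, snd b)} \<in> edges S" using ed bb by simp
        qed (use bb in auto)
        moreover have "e = {sh D b, sh D a}" using e by auto
        ultimately show ?thesis using a b by blast
      next
        assume "b = (fst a, snd a + 1)"
        then have "fst a = fst b" by simp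
        then show ?thesis using e a b ab by blast
      next
        assume "b = (fst a, snd a - 1)"
        then have "fst a = fst b" by simp
        then show ?thesis using e a b ab by blast
      qed
    qed
  qed
next
  show "?R \<subseteq> ?L" by (auto simp: del_def edges_def Let_def)
qed

definition R1 :: "pt \<Rightarrow> pt" where "R1 p = (fst p + 1, snd p)"
definition L1 :: "pt \<Rightarrow> pt" where "L1 p = (fst p - 1, snd p)"
definition U1 :: "pt \<Rightarrow> pt" where "U1 p = (fst p, snd p + 1)"
definition D1 :: "pt \<Rightarrow> pt" where "D1 p = (fst p, snd p - 1)"

definition htype :: "shape \<Rightarrow> pt \<Rightarrow> bool" where
  "htype S p \<longleftrightarrow> {p, R1 p} \<in> edges S \<and> {p, L1 p} \<in> edges S \<and> {p, U1 p} \<notin> edges S \<and> {p, D1 p} \<notin> edges S"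
definition vtype :: "shape \<Rightarrow> pt \<Rightarrow> bool" where
  "vtype S p \<longleftrightarrow> {p, U1 p} \<in> edges S \<and> {p, D1 p} \<in> edges S \<and> {p, R1 p} \<notin> edges S \<and> {p, L1 p} \<notin> edges S"

definition ccols :: "shape \<Rightarrow> int set" where "ccols S = {c. compressible_col S c}"

lemma ccols_finite: "good S \<Longrightarrow> finite (ccols S)"
proof -
  assume g: "good S"
  have "ccols S \<subseteq> fst ` nodes S" by (force simp: ccols_def compressible_col_def)
  then show ?thesis using g by (meson finite_imageI finite_subset good_def)
qed

lemma nonturn_shape:
  assumes g: "good S" and p: "p \<in> nodes S" and nt: "\<not> turning_point S p"
  shows "htype S p \<or> vtype S p"
proof -
  let ?N = "nbrs S p"
  have memN: "\<And>v. v \<in> ?N \<longleftrightarrow> {p, v} \<in> edges S" by (simp add: nbrs_def)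
  have dirs: "\<And>v. v \<in> ?N \<Longrightarrow> v = R1 p \<or> v = L1 p \<or> v = U1 p \<or> v = D1 p"
    using edge_nodes[OF g] grid_adj_cases unfolding memN R1_def L1_def U1_def D1_def by blast
  have fin: "finite ?N"
  proof -
    have "?N \<subseteq> nodes S"
    proof
      fix v assume "v \<in> ?N"
      then have "{p,v} \<in> edges S" by (simp add: nbrs_def)
      then show "v \<in> nodes S" using edge_nodes[OF g] by blast
    qed
    then show ?thesis using g finite_subset good_def by blast
  qed
  have ne: "?N \<noteq> {}" using g p unfolding good_def nbrs_def by auto
  have noperp: "\<And>v1 v2. v1 \<in> ?N \<Longrightarrow> v2 \<in> ?N \<Longrightarrow>
     (fst v1 - fst p) * (fst v2 - fst p) + (snd v1 - snd p) * (snd v2 - snd p) \<noteq> 0"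
    using nt p unfolding turning_point_def by blast
  have c1: "card ?N \<noteq> 1" using nt p unfolding turning_point_def by blast
  obtain v1 where v1: "v1 \<in> ?N" using ne by blast
  obtain v2 where v2: "v2 \<in> ?N" "v2 \<noteq> v1"
  proof -
    have "\<not> (\<forall>v\<in>?N. v = v1)"
    proof
      assume "\<forall>v\<in>?N. v = v1"
      then have "?N = {v1}" using v1 by blast
      then show False using c1 by simp
    qed
    then show ?thesis using that by blast
  qed
  have RU: "R1 p \<in> ?N \<Longrightarrow> U1 p \<notin> ?N" using noperp[of "R1 p" "U1 p"] by (auto simp: R1_def U1_def)
  have RD: "R1 p \<in> ?N \<Longrightarrow> D1 p \<notin> ?N" using noperp[of "R1 p" "D1 p"] by (auto simp: R1_def D1_def)
  have LU: "L1 p \<in> ?N \<Longrightarrow> U1 p \<notin> ?N" using noperp[of "L1 p" "U1 p"] by (auto simp: L1_def U1_def)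
  have LD: "L1 p \<in> ?N \<Longrightarrow> D1 p \<notin> ?N" using noperp[of "L1 p" "D1 p"] by (auto simp: L1_def D1_def)
  have d1: "dirs' " if "False" for dirs' using that by simp
  have "(R1 p \<in> ?N \<and> L1 p \<in> ?N \<and> U1 p \<notin> ?N \<and> D1 p \<notin> ?N) \<or> (U1 p \<in> ?N \<and> D1 p \<in> ?N \<and> R1 p \<notin> ?N \<and> L1 p \<notin> ?N)"
    using dirs[OF v1] dirs[OF v2(1)] v1 v2 RU RD LU LD by metis
  then show ?thesis unfolding htype_def vtype_def memN by blast
qed

lemma turn_in_ccols: "x \<in> ccols S \<Longrightarrow> (x, y) \<in> nodes S \<Longrightarrow> \<not> turning_point S (x, y)"
  by (auto simp: ccols_def compressible_col_def)

lemma ccols_htype: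
  assumes g: "good S" and x: "x \<in> ccols S" and p: "(x, y) \<in> nodes S"
  shows "htype S (x, y)"
proof (rule ccontr)
  assume nh: "\<not> htype S (x, y)"
  have vt: "vtype S (x, y)" using nonturn_shape[OF g p turn_in_ccols[OF x p]] nh by blast
  have chain: "(x, y + int k) \<in> nodes S \<and> vtype S (x, y + int k)" for k
  proof (induction k)
    case 0 then show ?case using p vt by simp
  next
    case (Suc k)
    let ?q = "(x, y + int k)"
    let ?q' = "(x, y + int (Suc k))"
    have e: "{?q, ?q'} \<in> edges S" using Suc unfolding vtype_def U1_def by (simp add: ac_simps)
    then have n': "?q' \<in> nodes S" using edge_nodes[OF g] by blast
    have "\<not> htype S ?q'"
    proof
      assume "htype S ?q'"
      then have "{?q', D1 ?q'} \<notin> edges S" unfolding htype_def by blast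
      moreover have "D1 ?q' = ?q" by (simp add: D1_def)
      ultimately show False using e by (simp add: insert_commute)
    qed
    then have "vtype S ?q'" using nonturn_shape[OF g n' turn_in_ccols[OF x n']] by blast
    then show ?case using n' by blast
  qed
  have "range (\<lambda>k::nat. (x, y + int k)) \<subseteq> nodes S" using chain by blast
  moreover have "inj (\<lambda>k::nat. (x, y + int k))" by (auto simp: inj_on_def)
  ultimately have "infinite (nodes S)"
    by (meson finite_imageD finite_subset infinite_UNIV_nat)
  then show False using g good_def by blast
qed

lemma ccols_right:
  assumes "good S" "x \<in> ccols S" "(x, y) \<in> nodes S"
  shows "{(x, y), (x + 1, y)} \<in> edges S \<and> (x + 1, y) \<in> nodes S"
  using ccols_htype[OF assms] edge_nodes[OF assms(1)] unfolding htype_def R1_def by auto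

lemma ccols_left:
  assumes "good S" "x \<in> ccols S" "(x, y) \<in> nodes S"
  shows "{(x - 1, y), (x, y)} \<in> edges S \<and> (x - 1, y) \<in> nodes S"
  using ccols_htype[OF assms] edge_nodes[OF assms(1)] unfolding htype_def L1_def
  by (auto simp: insert_commute)

lemma ccols_novert:
  assumes "good S" "x \<in> ccols S" "(x, y) \<in> nodes S"
  shows "{(x, y), (x, y')} \<notin> edges S"
proof
  assume e: "{(x, y), (x, y')} \<in> edges S"
  then have "grid_adj (x,y) (x,y')" using edge_nodes[OF assms(1)] by blast
  then have "y' = y + 1 \<or> y' = y - 1" by (auto simp: grid_adj_def)
  then show False using ccols_htype[OF assms] e unfolding htype_def U1_def D1_def by auto
qed

lemma walk_right:
  assumes g: "good S" and DC: "D \<subseteq> ccols S" and fD: "finite D"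
  shows "(z, y) \<in> nodes S \<Longrightarrow> z \<in> D \<Longrightarrow> \<exists>v>z. v \<notin> D \<and> (v, y) \<in> nodes S \<and>
     (\<forall>x. z \<le> x \<and> x < v \<longrightarrow> {(x, y), (x + 1, y)} \<in> edges S \<and> x \<in> D)"
proof (induction "nat (Max D - z)" arbitrary: z rule: less_induct)
  case less
  have r: "{(z, y), (z + 1, y)} \<in> edges S \<and> (z + 1, y) \<in> nodes S"
    using ccols_right[OF g _ less.prems(1)] less.prems(2) DC by blast
  show ?case
  proof (cases "z + 1 \<in> D")
    case False
    then show ?thesis using r less.prems
      by (intro exI[of _ "z+1"]) (auto simp: order_le_less)
  next
    case True
    have "z + 1 \<le> Max D" using True fD by simp
    then have "nat (Max D - (z + 1)) < nat (Max D - z)" by simp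
    from less.hyps[OF this r[THEN conjunct2] True] obtain v where
      v: "v > z + 1" "v \<notin> D" "(v, y) \<in> nodes S"
         "\<forall>x. z + 1 \<le> x \<and> x < v \<longrightarrow> {(x, y), (x + 1, y)} \<in> edges S \<and> x \<in> D" by blast
    have "\<forall>x. z \<le> x \<and> x < v \<longrightarrow> {(x, y), (x + 1, y)} \<in> edges S \<and> x \<in> D"
    proof (intro allI impI)
      fix x assume "z \<le> x \<and> x < v"
      then have "x = z \<or> z + 1 \<le> x \<and> x < v" by auto
      then show "{(x, y), (x + 1, y)} \<in> edges S \<and> x \<in> D" using v(4) r less.prems(2) by auto
    qed
    then show ?thesis using v by (intro exI[of _ v]) auto
  qed
qed

lemma walk_left:
  assumes g: "good S" and DC: "D \<subseteq> ccols S" and fD: "finite D"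
  shows "(z, y) \<in> nodes S \<Longrightarrow> z \<in> D \<Longrightarrow> \<exists>w<z. w \<notin> D \<and> (w, y) \<in> nodes S \<and>
     (\<forall>x. w \<le> x \<and> x < z \<longrightarrow> {(x, y), (x + 1, y)} \<in> edges S \<and> (w < x \<longrightarrow> x \<in> D))"
proof (induction "nat (z - Min D)" arbitrary: z rule: less_induct)
  case less
  have r: "{(z - 1, y), (z, y)} \<in> edges S \<and> (z - 1, y) \<in> nodes S"
    using ccols_left[OF g _ less.prems(1)] less.prems(2) DC by blast
  show ?case
  proof (cases "z - 1 \<in> D")
    case False
    have "\<forall>x. z - 1 \<le> x \<and> x < z \<longrightarrow> {(x, y), (x + 1, y)} \<in> edges S \<and> (z - 1 < x \<longrightarrow> x \<in> D)"
    proof (intro allI impI)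
      fix x assume "z - 1 \<le> x \<and> x < z"
      then have "x = z - 1" by simp
      then show "{(x, y), (x + 1, y)} \<in> edges S \<and> (z - 1 < x \<longrightarrow> x \<in> D)" using r by simp
    qed
    then show ?thesis using r less.prems False
      by (intro exI[of _ "z - 1"]) auto
  next
    case True
    have "Min D \<le> z - 1" using Min_le[OF fD True] .
    then have "nat ((z - 1) - Min D) < nat (z - Min D)" by simp
    from less.hyps[OF this r[THEN conjunct2] True] obtain w where
      w: "w < z - 1" "w \<notin> D" "(w, y) \<in> nodes S"
         "\<forall>x. w \<le> x \<and> x < z - 1 \<longrightarrow> {(x, y), (x + 1, y)} \<in> edges S \<and> (w < x \<longrightarrow> x \<in> D)" by blast
    have "\<forall>x. w \<le> x \<and> x < z \<longrightarrow> {(x, y), (x + 1, y)} \<in> edges S \<and> (w < x \<longrightarrow> x \<in> D)"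
    proof (intro allI impI)
      fix x assume "w \<le> x \<and> x < z"
      then have "x = z - 1 \<or> w \<le> x \<and> x < z - 1" by auto
      then show "{(x, y), (x + 1, y)} \<in> edges S \<and> (w < x \<longrightarrow> x \<in> D)" using w(4) r True by auto
    qed
    then show ?thesis using w by (intro exI[of _ w]) auto
  qed
qed

lemma padd_R1: "padd u (1, 0) = R1 u" by (simp add: padd_def R1_def)

lemma sig_inj:
  assumes "finite D" "x \<notin> D" "x' \<notin> D" "sig D x = sig D x'"
  shows "x = x'"
proof (rule ccontr)
  assume "x \<noteq> x'"
  then consider "x < x'" | "x' < x" by linarith
  then show False using sig_less_iff[OF assms(1) assms(2), of x'] sig_less_iff[OF assms(1) assms(3), of x] assms(4)
    by cases auto
qed

lemma sh_inj:
  assumes "finite D" "fst a \<notin> D" "fst b \<notin> D" "sh D a = sh D b"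
  shows "a = b"
  using sig_inj[OF assms(1-3)] assms(4) by (simp add: sh_def prod_eq_iff)

lemma pathD_shift:
  assumes "finite D" "pathD S D a b" "fst a \<notin> D"
  shows "sh D b = R1 (sh D a)"
proof -
  have "sig D (fst b) = sig D (fst a) + 1"
    using sig_step[OF assms(1), of "fst a" "fst b"] assms(2,3) unfolding pathD_def by blast
  then show ?thesis using assms(2) by (simp add: sh_def R1_def pathD_def)
qed

lemma pathD_adj:
  assumes "{(x, y), (x + 1, y)} \<in> edges S"
  shows "pathD S D (x, y) (x + 1, y)"
  unfolding pathD_def
proof (intro conjI allI impI)
  fix t assume "fst (x, y) \<le> t \<and> t < fst (x + 1, y)"
  then have "t = x" by simp
  then show "{(t, snd (x, y)), (t + 1, snd (x, y))} \<in> edges S" using assms by simp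
next
  fix t assume "fst (x, y) < t \<and> t < fst (x + 1, y)"
  then have False by (simp; linarith)
  then show "t \<in> D" ..
qed auto

lemma pathD_mono: "pathD S D a b \<Longrightarrow> D \<subseteq> D2 \<Longrightarrow> pathD S D2 a b"
  unfolding pathD_def by blast

lemma del_edge_path:
  assumes "good S" "a \<in> nodes S" "fst a \<notin> D" "b \<in> nodes S" "fst b \<notin> D" "pathD S D a b"
  shows "{sh D a, sh D b} \<in> edges (del S D)"
  unfolding del_edges_char[OF assms(1)]
  apply (rule CollectI, rule exI[of _ a], rule exI[of _ b])
  using assms(2-6) by simp

lemma del_edge_vert:
  assumes "good S" "a \<in> nodes S" "fst a \<notin> D" "{a, b} \<in> edges S" "fst a = fst b"
  shows "{sh D a, sh D b} \<in> edges (del S D)"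
proof -
  have "b \<in> nodes S" using edge_nodes[OF assms(1,4)] by blast
  then show ?thesis unfolding del_edges_char[OF assms(1)]
    apply (rule_tac CollectI, rule_tac exI[of _ a], rule_tac exI[of _ b])
    using assms(2-5) by simp
qed

lemma leftmost:
  assumes g: "good S"
  obtains p0 where "p0 \<in> nodes S" "fst p0 \<notin> ccols S" "\<And>p. p \<in> nodes S \<Longrightarrow> fst p0 \<le> fst p"
proof -
  have fin: "finite (fst ` nodes S)" and ne: "fst ` nodes S \<noteq> {}" using g by (auto simp: good_def)
  obtain p0 where p0: "p0 \<in> nodes S" "fst p0 = Min (fst ` nodes S)" using Min_in[OF fin ne] by auto
  have le: "\<And>p. p \<in> nodes S \<Longrightarrow> fst p0 \<le> fst p" using p0(2) fin by simp
  have "fst p0 \<notin> ccols S"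
  proof
    assume "fst p0 \<in> ccols S"
    then have "(fst p0 - 1, snd p0) \<in> nodes S" using ccols_left[OF g, of "fst p0" "snd p0"] p0(1) by simp
    then show False using le[OF \<open>(fst p0 - 1, snd p0) \<in> nodes S\<close>] by simp
  qed
  then show ?thesis using that p0(1) le by blast
qed

lemma good_del:
  assumes g: "good S" and DC: "D \<subseteq> ccols S"
  shows "good (del S D)"
proof -
  have fD: "finite D" using ccols_finite[OF g] DC finite_subset by blast
  obtain p0 where p0: "p0 \<in> nodes S" "fst p0 \<notin> ccols S" using leftmost[OF g] by blast
  have A: "finite (nodes (del S D))" using g by (simp add: del_nodes good_def)
  have "p0 \<in> {p\<in>nodes S. fst p \<notin> D}" using p0 DC by auto
  then have "sh D p0 \<in> nodes (del S D)" unfolding del_nodes by (rule imageI)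
  then have B: "nodes (del S D) \<noteq> {}" by blast
  have C: "\<forall>e\<in>edges (del S D). \<exists>p q. e = {p, q} \<and> p \<in> nodes (del S D) \<and> q \<in> nodes (del S D) \<and> grid_adj p q"
  proof
    fix e assume "e \<in> edges (del S D)"
    then obtain a b where e: "e = {sh D a, sh D b}" and a: "a \<in> nodes S" "fst a \<notin> D"
      and b: "b \<in> nodes S" "fst b \<notin> D" and h: "({a, b} \<in> edges S \<and> fst a = fst b) \<or> pathD S D a b"
      unfolding del_edges_char[OF g] by blast
    have na: "sh D a \<in> nodes (del S D)" and nb: "sh D b \<in> nodes (del S D)" using a b by (auto simp: del_nodes)
    have "grid_adj (sh D a) (sh D b)"
    proof (cases "pathD S D a b")
      case True
      then show ?thesis using pathD_shift[OF fD True a(2)] by (simp add: grid_adj_def R1_def)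
    next
      case False
      then have "{a,b} \<in> edges S" "fst a = fst b" using h by auto
      then have "grid_adj a b" using edge_nodes[OF g] by blast
      then show ?thesis using \<open>fst a = fst b\<close> by (simp add: grid_adj_def sh_def)
    qed
    then show "\<exists>p q. e = {p, q} \<and> p \<in> nodes (del S D) \<and> q \<in> nodes (del S D) \<and> grid_adj p q"
      using e na nb by blast
  qed
  have E: "\<forall>p\<in>nodes (del S D). \<exists>q. {p, q} \<in> edges (del S D)"
  proof
    fix p' assume "p' \<in> nodes (del S D)"
    then obtain p where p: "p' = sh D p" "p \<in> nodes S" "fst p \<notin> D" by (auto simp: del_nodes)
    obtain q where q: "{p, q} \<in> edges S" using g p(2) unfolding good_def by blast
    have gq: "grid_adj p q" and qn: "q \<in> nodes S" using edge_nodes[OF g q] by auto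
    obtain x y where pxy: "p = (x, y)" by force
    from grid_adj_cases[OF gq] show "\<exists>q. {p', q} \<in> edges (del S D)"
    proof (elim disjE)
      assume qq: "q = (fst p + 1, snd p)"
      show ?thesis
      proof (cases "x + 1 \<in> D")
        case False
        have "pathD S D (x,y) (x+1,y)" using q qq pxy by (intro pathD_adj) simp
        then have "{sh D p, sh D (x+1,y)} \<in> edges (del S D)"
          using del_edge_path[OF g, where a=p and b="(x+1,y)"] p qn qq pxy False by auto
        then show ?thesis using p(1) by blast
      next
        case True
        have "(x + 1, y) \<in> nodes S" using qn qq pxy by simp
        from walk_right[OF g DC fD this True] obtain v where
          v: "v > x + 1" "v \<notin> D" "(v, y) \<in> nodes S"
             "\<forall>t. x + 1 \<le> t \<and> t < v \<longrightarrow> {(t, y), (t + 1, y)} \<in> edges S \<and> t \<in> D" by blast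
        have "pathD S D (x,y) (v,y)" unfolding pathD_def
        proof (intro conjI allI impI)
          fix t assume "fst (x, y) \<le> t \<and> t < fst (v, y)"
          then have "t = x \<or> x + 1 \<le> t \<and> t < v" by auto
          then show "{(t, snd (x, y)), (t + 1, snd (x, y))} \<in> edges S" using v(4) q qq pxy by auto
        next
          fix t assume "fst (x, y) < t \<and> t < fst (v, y)"
          then show "t \<in> D" using v(4) by auto
        qed (use v in auto)
        then have "{sh D p, sh D (v,y)} \<in> edges (del S D)"
          using del_edge_path[OF g, where a=p and b="(v,y)"] p v pxy by auto
        then show ?thesis using p(1) by blast
      qed
    next
      assume qq: "q = (fst p - 1, snd p)"
      show ?thesis
      proof (cases "x - 1 \<in> D")
        case False
        have "pathD S D (x - 1,y) (x - 1 + 1,y)" using q qq pxy by (intro pathD_adj) (simp add: insert_commute)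
        then have "pathD S D (x - 1,y) (x,y)" by simp
        then have "{sh D (x-1,y), sh D p} \<in> edges (del S D)"
          using del_edge_path[OF g, where a="(x-1,y)" and b=p] p qn qq pxy False by auto
        then show ?thesis using p(1) by (metis insert_commute)
      next
        case True
        have "(x - 1, y) \<in> nodes S" using qn qq pxy by simp
        from walk_left[OF g DC fD this True] obtain w where
          w: "w < x - 1" "w \<notin> D" "(w, y) \<in> nodes S"
             "\<forall>t. w \<le> t \<and> t < x - 1 \<longrightarrow> {(t, y), (t + 1, y)} \<in> edges S \<and> (w < t \<longrightarrow> t \<in> D)" by blast
        have "pathD S D (w,y) (x,y)" unfolding pathD_def
        proof (intro conjI allI impI)
          fix t assume "fst (w, y) \<le> t \<and> t < fst (x, y)"
          then have "t = x - 1 \<or> w \<le> t \<and> t < x - 1" by auto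
          then show "{(t, snd (w, y)), (t + 1, snd (w, y))} \<in> edges S" using w(4) q qq pxy
            by (auto simp: insert_commute)
        next
          fix t assume "fst (w, y) < t \<and> t < fst (x, y)"
          then have "t = x - 1 \<or> w < t \<and> t < x - 1" by auto
          then show "t \<in> D" using w(4) True by auto
        qed (use w in auto)
        then have "{sh D (w,y), sh D p} \<in> edges (del S D)"
          using del_edge_path[OF g, where a="(w,y)" and b=p] p w pxy by auto
        then show ?thesis using p(1) by (metis insert_commute)
      qed
    next
      assume "q = (fst p, snd p + 1)"
      then have "fst p = fst q" by simp
      then have "{sh D p, sh D q} \<in> edges (del S D)" using del_edge_vert[OF g p(2) p(3) q] by blast
      then show ?thesis using p(1) by blast
    next
      assume "q = (fst p, snd p - 1)"
      then have "fst p = fst q" by simp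
      then have "{sh D p, sh D q} \<in> edges (del S D)" using del_edge_vert[OF g p(2) p(3) q] by blast
      then show ?thesis using p(1) by blast
    qed
  qed
  show ?thesis unfolding good_def by (rule conjI[OF A conjI[OF B conjI[OF C E]]])
qed

locale stage =
  fixes S :: shape and D N :: "int set"
  assumes g: "good S" and DC: "D \<subseteq> ccols S" and ND: "N \<subseteq> D"
    and sep: "\<And>z z'. z \<in> N \<Longrightarrow> z' \<in> N \<Longrightarrow> z < z' \<Longrightarrow> \<exists>x. z < x \<and> x < z' \<and> x \<notin> D"
begin

definition "D' = D - N"
definition "X = (\<lambda>z. sig D z - 1) ` N"
definition "hh t = card {s\<in>X. s < t}"
definition "disp q = (int (hh (fst q)), (0::int))"
definition "T = del S D"
definition "Ops = {q \<in> nodes T. fst q \<in> X \<and> {q, R1 q} \<in> edges T}"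
definition "fm q = padd q (disp q)"
definition "nw q = R1 (fm q)"

lemma fD: "finite D" using ccols_finite[OF g] DC finite_subset by blast
lemma fN: "finite N" using fD ND finite_subset by blast
lemma fD': "finite D'" using fD by (simp add: D'_def)
lemma D'D: "D' \<subseteq> D" by (auto simp: D'_def)
lemma fX: "finite X" using fN by (simp add: X_def)

lemma c1:
  assumes "x \<notin> D"
  shows "sig D' x = sig D x + int (card {z\<in>N. z < x})"
proof -
  have "{c\<in>D. c < x} = {c\<in>D'. c < x} \<union> {c\<in>N. c < x}" using ND by (auto simp: D'_def)
  moreover have "{c\<in>D'. c < x} \<inter> {c\<in>N. c < x} = {}" by (auto simp: D'_def)
  moreover have "finite {c\<in>D'. c < x}" "finite {c\<in>N. c < x}" using fD' fN by auto
  ultimately have "card {c\<in>D. c < x} = card {c\<in>D'. c < x} + card {c\<in>N. c < x}"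
    by (simp add: card_Un_disjoint)
  then show ?thesis unfolding sig_def by simp
qed

lemma inj_X: "inj_on (\<lambda>z. sig D z - 1) N"
proof (rule inj_onI)
  fix z z' assume z: "z \<in> N" and z': "z' \<in> N" and e: "sig D z - 1 = sig D z' - 1"
  show "z = z'"
  proof (rule ccontr)
    assume "z \<noteq> z'"
    then consider "z < z'" | "z' < z" by linarith
    then show False
    proof cases
      case 1
      obtain x where x: "z < x" "x < z'" "x \<notin> D" using sep[OF z z' 1] by blast
      have "sig D z \<le> sig D x" using sig_mono[OF fD] x(1) by simp
      moreover have "sig D x < sig D z'" using sig_less_iff[OF fD x(3)] x(2) by simp
      ultimately show False using e by simp
    next
      case 2
      obtain x where x: "z' < x" "x < z" "x \<notin> D" using sep[OF z' z 2] by blast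
      have "sig D z' \<le> sig D x" using sig_mono[OF fD] x(1) by simp
      moreover have "sig D x < sig D z" using sig_less_iff[OF fD x(3)] x(2) by simp
      ultimately show False using e by simp
    qed
  qed
qed

lemma c2:
  assumes x: "x \<notin> D"
  shows "hh (sig D x) = card {z\<in>N. z < x}"
proof -
  have "{s\<in>X. s < sig D x} = (\<lambda>z. sig D z - 1) ` {z\<in>N. z < x}"
  proof (rule set_eqI)
    fix s
    have key: "sig D z - 1 < sig D x \<longleftrightarrow> z < x" if "z \<in> N" for z
    proof -
      have zD: "z \<in> D" using that ND by blast
      then have "z \<noteq> x" using x by blast
      show ?thesis
      proof
        assume "sig D z - 1 < sig D x"
        then have "\<not> sig D x < sig D z" by simp
        then have "\<not> x < z" using sig_less_iff[OF fD x] by simp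
        then show "z < x" using \<open>z \<noteq> x\<close> by simp
      next
        assume "z < x"
        then show "sig D z - 1 < sig D x" using sig_mono[OF fD, of z x] by simp
      qed
    qed
    show "s \<in> {s\<in>X. s < sig D x} \<longleftrightarrow> s \<in> (\<lambda>z. sig D z - 1) ` {z\<in>N. z < x}"
      unfolding X_def using key by auto
  qed
  moreover have "inj_on (\<lambda>z. sig D z - 1) {z\<in>N. z < x}" using inj_X by (rule inj_on_subset) auto
  ultimately show ?thesis unfolding hh_def by (simp add: card_image)
qed

lemma fm_sh:
  assumes "fst p \<notin> D"
  shows "fm (sh D p) = sh D' p"
  using c1[OF assms] c2[OF assms] by (simp add: fm_def disp_def sh_def padd_def)

lemma kept_D': "fst p \<notin> D \<Longrightarrow> fst p \<notin> D'" using D'D by blast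

definition Br :: "int \<Rightarrow> int \<Rightarrow> int \<Rightarrow> int \<Rightarrow> bool" where
  "Br z y w v \<longleftrightarrow> z \<in> N \<and> (z, y) \<in> nodes S \<and> w < z \<and> z < v \<and> w \<notin> D \<and> v \<notin> D \<and>
     (w, y) \<in> nodes S \<and> (v, y) \<in> nodes S \<and> (\<forall>x. w < x \<and> x < v \<longrightarrow> x \<in> D) \<and> pathD S D (w, y) (v, y)"

lemma br_exists:
  assumes z: "z \<in> N" and n: "(z, y) \<in> nodes S"
  shows "\<exists>w v. Br z y w v"
proof -
  have zD: "z \<in> D" using z ND by blast
  obtain w where w: "w < z" "w \<notin> D" "(w, y) \<in> nodes S"
     "\<forall>x. w \<le> x \<and> x < z \<longrightarrow> {(x, y), (x + 1, y)} \<in> edges S \<and> (w < x \<longrightarrow> x \<in> D)"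
    using walk_left[OF g DC fD n zD] by blast
  obtain v where v: "v > z" "v \<notin> D" "(v, y) \<in> nodes S"
     "\<forall>x. z \<le> x \<and> x < v \<longrightarrow> {(x, y), (x + 1, y)} \<in> edges S \<and> x \<in> D"
    using walk_right[OF g DC fD n zD] by blast
  have int: "\<forall>x. w < x \<and> x < v \<longrightarrow> x \<in> D"
  proof (intro allI impI)
    fix x assume "w < x \<and> x < v"
    then show "x \<in> D" using w(4) v(4) by (cases "x < z") auto
  qed
  have "pathD S D (w, y) (v, y)" unfolding pathD_def
  proof (intro conjI allI impI)
    fix x assume "fst (w, y) \<le> x \<and> x < fst (v, y)"
    then show "{(x, snd (w, y)), (x + 1, snd (w, y))} \<in> edges S" using w(4) v(4) by (cases "x < z") auto
  next
    fix x assume "fst (w, y) < x \<and> x < fst (v, y)"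
    then show "x \<in> D" using int by simp
  qed (use w v in auto)
  then show ?thesis using z n w v int unfolding Br_def by blast
qed

lemma br_D':
  assumes b: "Br z y w v" and x: "w < x" "x < v" "x \<noteq> z"
  shows "x \<in> D'"
proof -
  have xD: "x \<in> D" using b x unfolding Br_def by blast
  have zN: "z \<in> N" using b unfolding Br_def by blast
  have "x \<notin> N"
  proof
    assume xN: "x \<in> N"
    consider "x < z" | "z < x" using x(3) by linarith
    then show False
    proof cases
      case 1
      obtain t where "x < t" "t < z" "t \<notin> D" using sep[OF xN zN 1] by blast
      then show False using b x unfolding Br_def by force
    next
      case 2
      obtain t where "z < t" "t < x" "t \<notin> D" using sep[OF zN xN 2] by blast
      then show False using b x unfolding Br_def by force
    qed
  qed
  then show ?thesis using xD by (simp add: D'_def)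
qed

lemma br_w_unique:
  assumes b: "Br z y w v" and w': "w' < z" "w' \<notin> D" "\<forall>x. w' < x \<and> x < z \<longrightarrow> x \<in> D"
  shows "w' = w"
proof (rule ccontr)
  assume "w' \<noteq> w"
  then consider "w < w'" | "w' < w" by linarith
  then show False
  proof cases
    case 1 then show False using b w' unfolding Br_def by force
  next
    case 2 then show False using b w' unfolding Br_def by force
  qed
qed

lemma br_v_unique:
  assumes b: "Br z y w v" and v': "z < v'" "v' \<notin> D" "\<forall>x. z < x \<and> x < v' \<longrightarrow> x \<in> D"
  shows "v' = v"
proof (rule ccontr)
  assume "v' \<noteq> v"
  then consider "v < v'" | "v' < v" by linarith
  then show False
  proof cases
    case 1 then show False using b v' unfolding Br_def by force
  next
    case 2 then show False using b v' unfolding Br_def by force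
  qed
qed

lemma br_facts:
  assumes b: "Br z y w v"
  shows "sh D (v, y) = R1 (sh D (w, y))"
    and "{sh D (w, y), sh D (v, y)} \<in> edges T"
    and "sh D (w, y) \<in> Ops"
    and "fm (sh D (w, y)) = sh D' (w, y)"
    and "fm (sh D (v, y)) = sh D' (v, y)"
    and "nw (sh D (w, y)) = sh D' (z, y)"
    and "pathD S D' (w, y) (z, y)"
    and "pathD S D' (z, y) (v, y)"
proof -
  from b have zN: "z \<in> N" and wz: "w < z" and zv: "z < v" and wD: "w \<notin> D" and vD: "v \<notin> D"
    and wn: "(w, y) \<in> nodes S" and vn: "(v, y) \<in> nodes S" and int: "\<forall>x. w < x \<and> x < v \<longrightarrow> x \<in> D"
    and p: "pathD S D (w, y) (v, y)" unfolding Br_def by auto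
  show s1: "sh D (v, y) = R1 (sh D (w, y))" using pathD_shift[OF fD p] wD by simp
  show s2: "{sh D (w, y), sh D (v, y)} \<in> edges T" unfolding T_def
    using del_edge_path[OF g wn _ vn _ p] wD vD by simp
  have "sig D z = sig D w + 1" using sig_step[OF fD wz wD] int zv by auto
  then have "fst (sh D (w, y)) \<in> X" unfolding X_def sh_def using zN by force
  moreover have "sh D (w, y) \<in> nodes T" unfolding T_def del_nodes using wn wD by force
  ultimately show "sh D (w, y) \<in> Ops" unfolding Ops_def using s1 s2 by simp
  show f1: "fm (sh D (w, y)) = sh D' (w, y)" using fm_sh[of "(w,y)"] wD by simp
  show "fm (sh D (v, y)) = sh D' (v, y)" using fm_sh[of "(v,y)"] vD by simp
  have "\<forall>x. w < x \<and> x < z \<longrightarrow> x \<in> D'" using br_D'[OF b] zv by auto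
  then have "sig D' z = sig D' w + 1" using sig_step[OF fD' wz] wD D'D by blast
  then show "nw (sh D (w, y)) = sh D' (z, y)" unfolding nw_def f1 by (simp add: R1_def sh_def)
  show "pathD S D' (w, y) (z, y)" using p br_D'[OF b] wz zv unfolding pathD_def by auto
  show "pathD S D' (z, y) (v, y)" using p br_D'[OF b] wz zv unfolding pathD_def by auto
qed

lemma edgesT_char: "edges T = {{sh D a, sh D b} | a b. a \<in> nodes S \<and> fst a \<notin> D \<and> b \<in> nodes S \<and> fst b \<notin> D \<and>
      (({a, b} \<in> edges S \<and> fst a = fst b) \<or> pathD S D a b)}"
  unfolding T_def by (rule del_edges_char[OF g])

lemma ops_br:
  assumes q: "q \<in> Ops"
  shows "\<exists>z y w v. Br z y w v \<and> q = sh D (w, y)"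
proof -
  from q have "fst q \<in> X" and e: "{q, R1 q} \<in> edges T" unfolding Ops_def by auto
  then obtain z where zN: "z \<in> N" and qz: "fst q = sig D z - 1" unfolding X_def by auto
  from e obtain a b where ab: "{q, R1 q} = {sh D a, sh D b}" and a: "a \<in> nodes S" "fst a \<notin> D"
    and b: "b \<in> nodes S" "fst b \<notin> D" and h: "({a, b} \<in> edges S \<and> fst a = fst b) \<or> pathD S D a b"
    unfolding edgesT_char by blast
  have p: "pathD S D a b"
  proof (rule ccontr)
    assume "\<not> pathD S D a b"
    then have "fst a = fst b" using h by blast
    then have "fst (sh D a) = fst (sh D b)" by (simp add: sh_def)
    then show False using ab by (auto simp: doubleton_eq_iff R1_def prod_eq_iff)
  qed
  have sb: "sh D b = R1 (sh D a)" using pathD_shift[OF fD p a(2)] .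
  have qa: "q = sh D a"
  proof -
    have "q = sh D a \<or> (q = sh D b \<and> R1 q = sh D a)" using ab by (auto simp: doubleton_eq_iff)
    moreover have "\<not> (q = sh D b \<and> R1 q = sh D a)"
    proof
      assume "q = sh D b \<and> R1 q = sh D a"
      then have "R1 (R1 (sh D a)) = sh D a" using sb by metis
      then have "fst (R1 (R1 (sh D a))) = fst (sh D a)" by simp
      then show False by (simp add: R1_def)
    qed
    ultimately show ?thesis by blast
  qed
  obtain w y where aw: "a = (w, y)" by force
  obtain v y' where bv: "b = (v, y')" by force
  have yy: "y' = y" using p aw bv by (simp add: pathD_def)
  have wz: "w < z"
  proof -
    have "sig D w < sig D z" using qz qa aw by (simp add: sh_def)
    then show ?thesis using sig_less_iff[OF fD, of w z] a(2) aw by simp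
  qed
  have zv: "z < v"
  proof -
    have "sig D v = sig D z" using sb qz qa aw bv by (simp add: sh_def R1_def)
    then have "\<not> v < z" using sig_less_iff[OF fD, of v z] b(2) bv by simp
    moreover have "v \<noteq> z" using b(2) bv zN ND by auto
    ultimately show ?thesis by simp
  qed
  have "{(z, y), (z + 1, y)} \<in> edges S" using p wz zv aw bv yy unfolding pathD_def by auto
  then have zn: "(z, y) \<in> nodes S" using edge_nodes[OF g] by blast
  have "Br z y w v" unfolding Br_def using zN zn wz zv a b aw bv yy p unfolding pathD_def by auto
  then show ?thesis using qa aw by blast
qed

lemma notops1:
  assumes a: "a \<in> nodes S" "fst a \<notin> D" and b: "b \<in> nodes S" "fst b \<notin> D"
    and p: "pathD S D a b" and no: "sh D a \<notin> Ops"
  shows "pathD S D' a b"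
proof -
  have "\<forall>x. fst a < x \<and> x < fst b \<longrightarrow> x \<in> D'"
  proof (intro allI impI)
    fix x assume x: "fst a < x \<and> x < fst b"
    then have xD: "x \<in> D" using p unfolding pathD_def by blast
    have "x \<notin> N"
    proof
      assume xN: "x \<in> N"
      have "{(x, snd a), (x + 1, snd a)} \<in> edges S" using p x unfolding pathD_def by auto
      then have xn: "(x, snd a) \<in> nodes S" using edge_nodes[OF g] by blast
      have sab: "snd b = snd a" using p by (simp add: pathD_def)
      have "pathD S D (fst a, snd a) (fst b, snd b)" using p by simp
      then have pb: "pathD S D (fst a, snd a) (fst b, snd a)" using sab by simp
      have an1: "(fst a, snd a) \<in> nodes S" using a(1) by simp
      have an2: "(fst b, snd a) \<in> nodes S" using b(1) sab by (metis prod.collapse)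
      note an = an1 an2
      have intD: "\<forall>t. fst a < t \<and> t < fst b \<longrightarrow> t \<in> D" using p unfolding pathD_def by blast
      have "Br x (snd a) (fst a) (fst b)" unfolding Br_def using xN xn x an a(2) b(2) pb intD by blast
      then have "sh D (fst a, snd a) \<in> Ops" by (rule br_facts(3))
      then show False using no by simp
    qed
    then show "x \<in> D'" using xD by (simp add: D'_def)
  qed
  then show ?thesis using p unfolding pathD_def by blast
qed

lemma notops2:
  assumes a: "a \<in> nodes S" "fst a \<notin> D" and b: "b \<in> nodes S" "fst b \<notin> D"
    and p: "pathD S D' a b"
  shows "sh D a \<notin> Ops"
proof
  assume "sh D a \<in> Ops"
  then obtain z y w v where br: "Br z y w v" and e: "sh D a = sh D (w, y)" using ops_br by blast
  have wD: "w \<notin> D" using br unfolding Br_def by blast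
  have aw: "a = (w, y)" using sh_inj[OF fD a(2) _ e] wD by simp
  have zN: "z \<in> N" and wz: "w < z" and zv: "z < v" and int: "\<forall>x. w < x \<and> x < v \<longrightarrow> x \<in> D"
    using br unfolding Br_def by auto
  have ab: "fst a < fst b" and intb: "\<forall>x. fst a < x \<and> x < fst b \<longrightarrow> x \<in> D'"
    using p unfolding pathD_def by auto
  consider "z < fst b" | "fst b = z" | "fst b < z" by linarith
  then show False
  proof cases
    case 1 then show False using intb aw wz zN by (auto simp: D'_def)
  next
    case 2 then show False using b(2) zN ND by auto
  next
    case 3 then show False using int ab aw zv b(2) by auto
  qed
qed

lemma elong_iff: "elong T Ops (1, 0) u v \<longleftrightarrow> u \<in> Ops \<and> v = R1 u \<and> {u, v} \<in> edges T"
  by (simp add: elong_def padd_R1)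

lemma sr_eq: "step_result T Ops (1, 0) disp = (fm ` nodes T \<union> nw ` Ops,
   {{fm u, fm v} | u v. u \<in> nodes T \<and> v \<in> nodes T \<and> {u, v} \<in> edges T \<and>
       \<not> elong T Ops (1, 0) u v \<and> \<not> elong T Ops (1, 0) v u}
   \<union> {{fm u, nw u} | u. u \<in> Ops}
   \<union> {{nw u, fm (R1 u)} | u. u \<in> Ops \<and> {u, R1 u} \<in> edges T})"
  unfolding step_result_def Let_def fm_def nw_def padd_R1 by simp

lemma nodes_eq: "fm ` nodes T \<union> nw ` Ops = nodes (del S D')"
proof
  show "fm ` nodes T \<union> nw ` Ops \<subseteq> nodes (del S D')"
  proof
    fix q assume "q \<in> fm ` nodes T \<union> nw ` Ops"
    then consider (a) u where "u \<in> nodes T" "q = fm u" | (b) u where "u \<in> Ops" "q = nw u" by blast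
    then show "q \<in> nodes (del S D')"
    proof cases
      case a
      then obtain p where p: "p \<in> nodes S" "fst p \<notin> D" "u = sh D p" unfolding T_def del_nodes by blast
      then have "q = sh D' p" using a fm_sh by simp
      then show ?thesis using p kept_D' unfolding del_nodes by blast
    next
      case b
      then obtain z y w v where br: "Br z y w v" and u: "u = sh D (w, y)" using ops_br by blast
      then have "q = sh D' (z, y)" using b br_facts(6)[OF br] by simp
      moreover have "(z, y) \<in> nodes S" "z \<notin> D'" using br unfolding Br_def D'_def by auto
      ultimately show ?thesis unfolding del_nodes by force
    qed
  qed
next
  show "nodes (del S D') \<subseteq> fm ` nodes T \<union> nw ` Ops"
  proof
    fix q assume "q \<in> nodes (del S D')"
    then obtain p where p: "p \<in> nodes S" "fst p \<notin> D'" "q = sh D' p" unfolding del_nodes by blast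
    show "q \<in> fm ` nodes T \<union> nw ` Ops"
    proof (cases "fst p \<in> D")
      case False
      then have "sh D p \<in> nodes T" using p unfolding T_def del_nodes by blast
      moreover have "fm (sh D p) = q" using fm_sh[OF False] p by simp
      ultimately show ?thesis by blast
    next
      case True
      then have zN: "fst p \<in> N" using p(2) by (simp add: D'_def)
      have "(fst p, snd p) \<in> nodes S" using p by simp
      then obtain w v where br: "Br (fst p) (snd p) w v" using br_exists[OF zN] by blast
      have "nw (sh D (w, snd p)) = q" using br_facts(6)[OF br] p by simp
      then show ?thesis using br_facts(3)[OF br] by blast
    qed
  qed
qed

lemma dbl_img: "{u, v} = {a, b} \<Longrightarrow> {f u, f v} = {f a, f b}"
  by (auto simp: doubleton_eq_iff)

lemma mk_edge:
  assumes "a \<in> nodes S" "fst a \<notin> D'" "b \<in> nodes S" "fst b \<notin> D'"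
    "({a, b} \<in> edges S \<and> fst a = fst b) \<or> pathD S D' a b"
  shows "{sh D' a, sh D' b} \<in> edges (del S D')"
  unfolding del_edges_char[OF g]
  apply (rule CollectI, rule exI[of _ a], rule exI[of _ b])
  using assms by simp

lemma edges_sub: "{{fm u, fm v} | u v. u \<in> nodes T \<and> v \<in> nodes T \<and> {u, v} \<in> edges T \<and>
       \<not> elong T Ops (1, 0) u v \<and> \<not> elong T Ops (1, 0) v u}
   \<union> {{fm u, nw u} | u. u \<in> Ops}
   \<union> {{nw u, fm (R1 u)} | u. u \<in> Ops \<and> {u, R1 u} \<in> edges T} \<subseteq> edges (del S D')"
proof (intro Un_least subsetI)
  fix e assume "e \<in> {{fm u, fm v} | u v. u \<in> nodes T \<and> v \<in> nodes T \<and> {u, v} \<in> edges T \<and>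
       \<not> elong T Ops (1, 0) u v \<and> \<not> elong T Ops (1, 0) v u}"
  then obtain u v where e: "e = {fm u, fm v}" and uv: "{u, v} \<in> edges T"
    and nu: "\<not> elong T Ops (1, 0) u v" and nv: "\<not> elong T Ops (1, 0) v u" by blast
  from uv obtain a b where ab: "{u, v} = {sh D a, sh D b}" and a: "a \<in> nodes S" "fst a \<notin> D"
    and b: "b \<in> nodes S" "fst b \<notin> D" and h: "({a, b} \<in> edges S \<and> fst a = fst b) \<or> pathD S D a b"
    unfolding edgesT_char by blast
  have e2: "e = {sh D' a, sh D' b}" using dbl_img[OF ab, of fm] e fm_sh a(2) b(2) by simp
  show "e \<in> edges (del S D')"
  proof (cases "pathD S D a b")
    case False
    then show ?thesis using h e2 mk_edge a b kept_D' by blast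
  next
    case True
    have sb: "sh D b = R1 (sh D a)" using pathD_shift[OF fD True a(2)] .
    have eT: "{sh D a, sh D b} \<in> edges T" using uv ab by simp
    have "sh D a \<notin> Ops"
    proof
      assume "sh D a \<in> Ops"
      then have "elong T Ops (1, 0) (sh D a) (sh D b)" using sb eT elong_iff by simp
      then show False using nu nv ab by (auto simp: doubleton_eq_iff)
    qed
    then have "pathD S D' a b" using notops1[OF a b True] by simp
    then show ?thesis using e2 mk_edge a b kept_D' by blast
  qed
next
  fix e assume "e \<in> {{fm u, nw u} | u. u \<in> Ops}"
  then obtain u where e: "e = {fm u, nw u}" and u: "u \<in> Ops" by blast
  obtain z y w v where br: "Br z y w v" and uw: "u = sh D (w, y)" using ops_br[OF u] by blast
  have e2: "e = {sh D' (w, y), sh D' (z, y)}" using e uw br_facts[OF br] by simp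
  have "(w, y) \<in> nodes S" "w \<notin> D'" "(z, y) \<in> nodes S" "z \<notin> D'"
    using br unfolding Br_def D'_def by auto
  then show "e \<in> edges (del S D')" using e2 mk_edge br_facts(7)[OF br] by simp
next
  fix e assume "e \<in> {{nw u, fm (R1 u)} | u. u \<in> Ops \<and> {u, R1 u} \<in> edges T}"
  then obtain u where e: "e = {nw u, fm (R1 u)}" and u: "u \<in> Ops" by blast
  obtain z y w v where br: "Br z y w v" and uw: "u = sh D (w, y)" using ops_br[OF u] by blast
  have e2: "e = {sh D' (z, y), sh D' (v, y)}" using e uw br_facts[OF br] by simp
  have "(v, y) \<in> nodes S" "v \<notin> D'" "(z, y) \<in> nodes S" "z \<notin> D'"
    using br unfolding Br_def D'_def by auto
  then show "e \<in> edges (del S D')" using e2 mk_edge br_facts(8)[OF br] by simp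
qed

lemma edges_sup: "edges (del S D') \<subseteq> {{fm u, fm v} | u v. u \<in> nodes T \<and> v \<in> nodes T \<and> {u, v} \<in> edges T \<and>
       \<not> elong T Ops (1, 0) u v \<and> \<not> elong T Ops (1, 0) v u}
   \<union> {{fm u, nw u} | u. u \<in> Ops}
   \<union> {{nw u, fm (R1 u)} | u. u \<in> Ops \<and> {u, R1 u} \<in> edges T}" (is "_ \<subseteq> ?E1 \<union> ?E2 \<union> ?E3")
proof
  fix e assume "e \<in> edges (del S D')"
  then obtain a b where e: "e = {sh D' a, sh D' b}" and a: "a \<in> nodes S" "fst a \<notin> D'"
    and b: "b \<in> nodes S" "fst b \<notin> D'" and h: "({a, b} \<in> edges S \<and> fst a = fst b) \<or> pathD S D' a b"
    unfolding del_edges_char[OF g] by blast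
  show "e \<in> ?E1 \<union> ?E2 \<union> ?E3"
  proof (cases "pathD S D' a b")
    case False
    then have ab: "{a, b} \<in> edges S" "fst a = fst b" using h by auto
    have aD: "fst a \<notin> D"
    proof
      assume "fst a \<in> D"
      then have "fst a \<in> ccols S" using DC by blast
      then have "{(fst a, snd a), (fst a, snd b)} \<notin> edges S"
        using ccols_novert[OF g, of "fst a" "snd a" "snd b"] a(1) by simp
      then show False using ab by (metis prod.collapse)
    qed
    then have bD: "fst b \<notin> D" using ab by simp
    have uT: "sh D a \<in> nodes T" "sh D b \<in> nodes T" using a b aD bD unfolding T_def del_nodes by auto
    have eT: "{sh D a, sh D b} \<in> edges T" unfolding T_def using del_edge_vert[OF g a(1) aD ab] .
    have ne1: "\<not> elong T Ops (1, 0) (sh D a) (sh D b)" using ab by (auto simp: elong_iff R1_def sh_def)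
    have ne2: "\<not> elong T Ops (1, 0) (sh D b) (sh D a)" using ab by (auto simp: elong_iff R1_def sh_def)
    have "e = {fm (sh D a), fm (sh D b)}" using e fm_sh aD bD by simp
    then have "e \<in> ?E1" using uT eT ne1 ne2 by blast
    then show ?thesis by blast
  next
    case True
    have ab: "fst a < fst b" "snd a = snd b" and int: "\<forall>x. fst a < x \<and> x < fst b \<longrightarrow> x \<in> D'"
      using True unfolding pathD_def by auto
    have notboth: "\<not> (fst a \<in> N \<and> fst b \<in> N)"
    proof
      assume "fst a \<in> N \<and> fst b \<in> N"
      then obtain x where "fst a < x" "x < fst b" "x \<notin> D" using sep ab by blast
      then show False using int D'D by blast
    qed
    consider (nn) "fst a \<notin> N" "fst b \<notin> N" | (an) "fst a \<in> N" "fst b \<notin> N" | (bn) "fst a \<notin> N" "fst b \<in> N"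
      using notboth by blast
    then show ?thesis
    proof cases
      case nn
      then have aD: "fst a \<notin> D" and bD: "fst b \<notin> D" using a(2) b(2) by (auto simp: D'_def)
      have pD: "pathD S D a b" using pathD_mono[OF True D'D] .
      have uT: "sh D a \<in> nodes T" "sh D b \<in> nodes T" using a b aD bD unfolding T_def del_nodes by auto
      have eT: "{sh D a, sh D b} \<in> edges T" unfolding T_def using del_edge_path[OF g a(1) aD b(1) bD pD] .
      have sb: "sh D b = R1 (sh D a)" using pathD_shift[OF fD pD aD] .
      have no: "sh D a \<notin> Ops" using notops2[OF a(1) aD b(1) bD True] .
      have ne1: "\<not> elong T Ops (1, 0) (sh D a) (sh D b)" using no by (simp add: elong_iff)
      have ne2: "\<not> elong T Ops (1, 0) (sh D b) (sh D a)" using sb by (auto simp: elong_iff R1_def prod_eq_iff)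
      have "e = {fm (sh D a), fm (sh D b)}" using e fm_sh aD bD by simp
      then have "e \<in> ?E1" using uT eT ne1 ne2 by blast
      then show ?thesis by blast
    next
      case an
      have "(fst a, snd a) \<in> nodes S" using a(1) by simp
      then obtain w v where br: "Br (fst a) (snd a) w v" using br_exists[OF an(1)] by blast
      have bD: "fst b \<notin> D" using b(2) an(2) by (auto simp: D'_def)
      have "fst b = v" using br_v_unique[OF br ab(1) bD] int D'D by blast
      then have bv: "b = (v, snd a)" using ab(2) by (metis prod.collapse)
      have aa: "a = (fst a, snd a)" by simp
      let ?u = "sh D (w, snd a)"
      have u: "?u \<in> Ops" "{?u, R1 ?u} \<in> edges T" using br_facts(1,2,3)[OF br] by auto
      have "e = {nw ?u, fm (R1 ?u)}" using e bv br_facts[OF br] by (metis aa)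
      then have "e \<in> ?E3" using u by blast
      then show ?thesis by blast
    next
      case bn
      have "(fst b, snd b) \<in> nodes S" using b(1) by simp
      then obtain w v where br: "Br (fst b) (snd b) w v" using br_exists[OF bn(2)] by blast
      have aD: "fst a \<notin> D" using a(2) bn(1) by (auto simp: D'_def)
      have "fst a = w" using br_w_unique[OF br ab(1) aD] int D'D by blast
      then have aw: "a = (w, snd b)" using ab(2) by (metis prod.collapse)
      have bb: "b = (fst b, snd b)" by simp
      let ?u = "sh D (w, snd b)"
      have u: "?u \<in> Ops" using br_facts(3)[OF br] by auto
      have "e = {fm ?u, nw ?u}" using e aw br_facts[OF br] by (metis bb)
      then have "e \<in> ?E2" using u by blast
      then show ?thesis by blast
    qed
  qed
qed

lemma pair_nodes_edges: "(nodes Q, edges Q) = Q" by (simp add: nodes_def edges_def)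

lemma stage_result: "step_result T Ops (1, 0) disp = del S D'"
proof -
  have "step_result T Ops (1, 0) disp = (nodes (del S D'), edges (del S D'))"
    unfolding sr_eq nodes_eq using edges_sub edges_sup by (simp only: set_eq_subset) blast
  then show ?thesis by (simp add: pair_nodes_edges)
qed

lemma anchor: "\<exists>u0\<in>nodes T. \<forall>t\<in>X. fst u0 \<le> t"
proof -
  obtain p0 where p0: "p0 \<in> nodes S" "fst p0 \<notin> ccols S" "\<And>p. p \<in> nodes S \<Longrightarrow> fst p0 \<le> fst p"
    using leftmost[OF g] by blast
  have p0D: "fst p0 \<notin> D" using p0(2) DC by blast
  have "sh D p0 \<in> nodes T" using p0(1) p0D unfolding T_def del_nodes by blast
  moreover have "\<forall>t\<in>X. fst (sh D p0) \<le> t"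
  proof
    fix t assume "t \<in> X"
    then obtain z where zN: "z \<in> N" and t: "t = sig D z - 1" unfolding X_def by blast
    have "z \<in> ccols S" using zN ND DC by blast
    then obtain y where "(z, y) \<in> nodes S" unfolding ccols_def compressible_col_def by blast
    then obtain w v where br: "Br z y w v" using br_exists[OF zN] by blast
    have wn: "(w, y) \<in> nodes S" and wz: "w < z" and wD: "w \<notin> D" and int: "\<forall>x. w < x \<and> x < v \<longrightarrow> x \<in> D"
      and zv: "z < v" using br unfolding Br_def by auto
    have "sig D z = sig D w + 1" using sig_step[OF fD wz wD] int zv by auto
    moreover have "sig D (fst p0) \<le> sig D w" using sig_mono[OF fD p0(3)[OF wn]] by simp
    ultimately show "fst (sh D p0) \<le> t" using t by (simp add: sh_def)
  qed
  ultimately show ?thesis by blast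
qed

end

lemma hh_mono: "finite X \<Longrightarrow> t \<le> t' \<Longrightarrow> card {s\<in>X. s < t} \<le> card {s\<in>X. s < (t'::int)}"
  by (rule card_mono) auto

lemma hh_in: "finite X \<Longrightarrow> t \<in> X \<Longrightarrow> card {s\<in>X. s < t + 1} = card {s\<in>X. s < (t::int)} + 1"
proof -
  assume f: "finite X" and t: "t \<in> X"
  have "{s\<in>X. s < t + 1} = insert t {s\<in>X. s < t}" using t by auto
  then show ?thesis using f by simp
qed

lemma hh_out: "t \<notin> X \<Longrightarrow> card {s\<in>X. s < t + 1} = card {s\<in>X. s < (t::int)}"
proof -
  assume t: "t \<notin> X"
  have "{s\<in>X. s < t + 1} = {s\<in>X. s < t}"
  proof (rule set_eqI)
    fix s
    show "s \<in> {s\<in>X. s < t + 1} \<longleftrightarrow> s \<in> {s\<in>X. s < t}"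
    proof (cases "s = t")
      case True then show ?thesis using t by simp
    next
      case False then show ?thesis by auto
    qed
  qed
  then show ?thesis by simp
qed

lemma step_gen:
  fixes T :: shape and X :: "int set" and disp :: "pt \<Rightarrow> pt"
  assumes wfT: "\<forall>e\<in>edges T. \<exists>p q. e = {p, q} \<and> p \<in> nodes T \<and> q \<in> nodes T \<and> grid_adj p q"
    and fX: "finite X" and u0: "u0 \<in> nodes T" "\<forall>t\<in>X. fst u0 \<le> t"
    and dispd: "\<And>q. disp q = (int (card {s\<in>X. s < fst q}), 0)"
    and Opsd: "Ops = {q \<in> nodes T. fst q \<in> X \<and> {q, R1 q} \<in> edges T}"
  shows "growth_step T (step_result T Ops (1, 0) disp)"
proof -
  define hh where "hh t = card {s\<in>X. s < t}" for t
  have dd: "disp q = (int (hh (fst q)), 0)" for q using dispd hh_def by simp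
  have adj: "grid_adj u v" if "{u, v} \<in> edges T" for u v
  proof -
    from wfT that obtain p q where "{u,v} = {p,q}" "grid_adj p q" by blast
    then show ?thesis by (auto simp: doubleton_eq_iff intro: grid_adj_sym)
  qed
  have OpsT: "Ops \<subseteq> nodes T" using Opsd by auto
  have dir: "(1, 0) \<in> cardinal_dirs" by (simp add: cardinal_dirs_def)
  have el: "elong T Ops (1, 0) u v \<longleftrightarrow> u \<in> Ops \<and> v = R1 u \<and> {u, v} \<in> edges T" for u v
    by (simp add: elong_def padd_R1)
  have vd: "valid_disp T Ops (1, 0) u0 disp"
    unfolding valid_disp_def
  proof (intro conjI ballI impI)
    show "u0 \<in> nodes T" by (rule u0(1))
    have "{s\<in>X. s < fst u0} = {}" using u0(2) by force
    then have "card {s\<in>X. s < fst u0} = 0" by (metis card.empty)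
    then show "disp u0 = (0, 0)" using dispd by simp
  next
    fix u v assume un: "u \<in> nodes T" and vn: "v \<in> nodes T" and e: "{u, v} \<in> edges T"
    have e': "{v, u} \<in> edges T" using e by (simp add: insert_commute)
    from grid_adj_cases[OF adj[OF e]]
    show "padd (disp v) (pneg (disp u)) =
          (if elong T Ops (1, 0) u v then (1, 0) else if elong T Ops (1, 0) v u then pneg (1, 0) else (0, 0))"
    proof (elim disjE)
      assume v: "v = (fst u + 1, snd u)"
      have "v = R1 u" using v by (simp add: R1_def)
      then have l: "elong T Ops (1, 0) u v \<longleftrightarrow> fst u \<in> X" using el e un Opsd by auto
      have "u \<noteq> R1 v" using v by (simp add: R1_def prod_eq_iff)
      then have r: "\<not> elong T Ops (1, 0) v u" using el[of v u] by blast
      show ?thesis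
      proof (cases "fst u \<in> X")
        case True
        then show ?thesis using l r v hh_in[OF fX True] by (simp add: dd hh_def padd_def pneg_def)
      next
        case False
        then show ?thesis using l r v hh_out[OF False] by (simp add: dd hh_def padd_def pneg_def)
      qed
    next
      assume v: "v = (fst u - 1, snd u)"
      have "u = R1 v" using v by (simp add: R1_def)
      then have l: "elong T Ops (1, 0) v u \<longleftrightarrow> fst v \<in> X" using el e' vn Opsd by auto
      have "v \<noteq> R1 u" using v by (simp add: R1_def prod_eq_iff)
      then have r: "\<not> elong T Ops (1, 0) u v" using el[of u v] by blast
      have fu: "fst u = fst v + 1" using v by simp
      show ?thesis
      proof (cases "fst v \<in> X")
        case True
        then show ?thesis using l r fu hh_in[OF fX True] by (simp add: dd hh_def padd_def pneg_def)
      next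
        case False
        then show ?thesis using l r fu hh_out[OF False] by (simp add: dd hh_def padd_def pneg_def)
      qed
    next
      assume v: "v = (fst u, snd u + 1)"
      have "v \<noteq> R1 u" "u \<noteq> R1 v" using v by (simp_all add: R1_def prod_eq_iff)
      then have "\<not> elong T Ops (1, 0) u v" "\<not> elong T Ops (1, 0) v u" using el by blast+
      moreover have "fst v = fst u" using v by simp
      ultimately show ?thesis by (simp add: dd padd_def pneg_def)
    next
      assume v: "v = (fst u, snd u - 1)"
      have "v \<noteq> R1 u" "u \<noteq> R1 v" using v by (simp_all add: R1_def prod_eq_iff)
      then have "\<not> elong T Ops (1, 0) u v" "\<not> elong T Ops (1, 0) v u" using el by blast+
      moreover have "fst v = fst u" using v by simp
      ultimately show ?thesis by (simp add: dd padd_def pneg_def)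
    qed
  qed
  have cf: "collision_free T Ops (1, 0) disp"
    unfolding collision_free_def
  proof (intro allI impI)
    fix \<tau> :: real assume tau: "0 < \<tau> \<and> \<tau> \<le> 1"
    define P where "P x = real_of_int x + \<tau> * real (hh x)" for x
    have Pm': "P x + real_of_int (x' - x) \<le> P x'" if "x \<le> x'" for x x'
    proof -
      have h: "hh x \<le> hh x'" using hh_mono[OF fX that] hh_def by simp
      have b: "\<tau> * real (hh x) \<le> \<tau> * real (hh x')" using h tau by (intro mult_left_mono) simp_all
      show ?thesis unfolding P_def using b by simp
    qed
    have Pm: "P x \<le> P x'" if "x \<le> x'" for x x' using Pm'[OF that] that by linarith
    have Ps: "P x + 1 \<le> P x'" if "x < x'" for x x'
    proof -
      have "real_of_int (x' - x) \<ge> 1" using that by simp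
      then show ?thesis using Pm'[of x x'] that by linarith
    qed
    have Pop: "P (x + 1) = P x + 1 + \<tau>" if "x \<in> X" for x
      using hh_in[OF fX that] hh_def unfolding P_def by (simp add: algebra_simps)
    have tl: "traj disp (1, 0) (Inl a) \<tau> = (P (fst a), real_of_int (snd a))" for a
      by (simp add: traj_def dd P_def)
    have tr: "traj disp (1, 0) (Inr u) \<tau> = (P (fst u) + \<tau>, real_of_int (snd u))" for u
      by (simp add: traj_def dd P_def algebra_simps)
    show "inj_on (\<lambda>x. traj disp (1, 0) x \<tau>) (Inl ` nodes T \<union> Inr ` Ops)"
    proof (rule inj_onI)
      fix x1 x2 assume x1: "x1 \<in> Inl ` nodes T \<union> Inr ` Ops" and x2: "x2 \<in> Inl ` nodes T \<union> Inr ` Ops"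
        and eq: "traj disp (1, 0) x1 \<tau> = traj disp (1, 0) x2 \<tau>"
      have mix: False if a: "traj disp (1, 0) (Inl a) \<tau> = traj disp (1, 0) (Inr u) \<tau>" and u: "u \<in> Ops" for a u
      proof -
        have ux: "fst u \<in> X" using u Opsd by auto
        have e: "P (fst a) = P (fst u) + \<tau>" using a tl tr by simp
        consider "fst a < fst u" | "fst a = fst u" | "fst a = fst u + 1" | "fst a > fst u + 1" by linarith
        then show False
        proof cases
          case 1 then show False using Ps[OF 1] e tau by simp
        next
          case 2 then show False using e tau by simp
        next
          case 3 then show False using e Pop[OF ux] by simp
        next
          case 4 then show False using Ps[OF 4] e Pop[OF ux] tau by simp
        qed
      qed
      have pinj: "x = x'" if "P x = P x'" for x x'
      proof (rule ccontr)
        assume "x \<noteq> x'"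
        then consider "x < x'" | "x' < x" by linarith
        then show False using Ps that by cases force+
      qed
      show "x1 = x2"
      proof (cases x1)
        case (Inl a)
        show ?thesis
        proof (cases x2)
          case (Inl b)
          then have "P (fst a) = P (fst b)" "snd a = snd b" using eq \<open>x1 = Inl a\<close> tl by auto
          then show ?thesis using pinj Inl \<open>x1 = Inl a\<close> by (simp add: prod_eq_iff)
        next
          case (Inr u)
          then have "u \<in> Ops" using x2 by auto
          then show ?thesis using mix eq Inr \<open>x1 = Inl a\<close> by blast
        qed
      next
        case (Inr u)
        show ?thesis
        proof (cases x2)
          case (Inl b)
          have "u \<in> Ops" using x1 Inr by auto
          then show ?thesis using mix eq Inl \<open>x1 = Inr u\<close> by metis
        next
          case (Inr v)
          then have "P (fst u) = P (fst v)" "snd u = snd v" using eq \<open>x1 = Inr u\<close> tr by auto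
          then show ?thesis using pinj Inr \<open>x1 = Inr u\<close> by (simp add: prod_eq_iff)
        qed
      qed
    qed
  qed
  show ?thesis unfolding growth_step_def using OpsT dir vd cf by blast
qed

lemma sw_mem: "u \<in> prod.swap ` A \<longleftrightarrow> prod.swap u \<in> A"
  by force

lemma swimg_mem: "x \<in> (\<lambda>e. prod.swap ` e) ` E \<longleftrightarrow> prod.swap ` x \<in> E"
proof
  assume "x \<in> (\<lambda>e. prod.swap ` e) ` E"
  then obtain e where "e \<in> E" "x = prod.swap ` e" by blast
  then show "prod.swap ` x \<in> E" by (simp add: image_image)
next
  assume "prod.swap ` x \<in> E"
  moreover have "x = prod.swap ` (prod.swap ` x)" by (simp add: image_image)
  ultimately show "x \<in> (\<lambda>e. prod.swap ` e) ` E" by blast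
qed

lemma swap_nodes: "nodes (swap_shape T) = prod.swap ` nodes T"
  by (simp add: swap_shape_def nodes_def)

lemma swap_edges: "edges (swap_shape T) = (\<lambda>e. prod.swap ` e) ` edges T"
  by (simp add: swap_shape_def edges_def)

lemma swap_edge_mem: "{a, b} \<in> edges (swap_shape T) \<longleftrightarrow> {prod.swap a, prod.swap b} \<in> edges T"
  by (simp add: swap_edges swimg_mem)

lemma swap_padd: "prod.swap (padd p q) = padd (prod.swap p) (prod.swap q)"
  by (simp add: padd_def)

lemma swap_pneg: "prod.swap (pneg p) = pneg (prod.swap p)"
  by (simp add: pneg_def)

lemma swap_growth:
  assumes "growth_step T T'"
  shows "growth_step (swap_shape T) (swap_shape T')"
proof -
  let ?sw = "prod.swap :: pt \<Rightarrow> pt"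
  obtain Ops d u0 disp where Ops: "Ops \<subseteq> nodes T" and d: "d \<in> cardinal_dirs"
    and vd: "valid_disp T Ops d u0 disp" and cf: "collision_free T Ops d disp"
    and T': "T' = step_result T Ops d disp"
    using assms unfolding growth_step_def by blast
  define Ops' where "Ops' = ?sw ` Ops"
  define d' where "d' = ?sw d"
  define u0' where "u0' = ?sw u0"
  define disp' where "disp' p = ?sw (disp (?sw p))" for p
  let ?T = "swap_shape T"
  have el: "elong ?T Ops' d' u v \<longleftrightarrow> elong T Ops d (?sw u) (?sw v)" for u v
  proof -
    have "v = padd u d' \<longleftrightarrow> ?sw v = padd (?sw u) d"
      unfolding d'_def by (auto simp: padd_def prod_eq_iff)
    then show ?thesis unfolding elong_def Ops'_def sw_mem swap_edge_mem by simp
  qed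
  have A: "Ops' \<subseteq> nodes ?T" using Ops unfolding Ops'_def swap_nodes by blast
  have B: "d' \<in> cardinal_dirs" using d unfolding d'_def cardinal_dirs_def by auto
  have C: "valid_disp ?T Ops' d' u0' disp'"
    unfolding valid_disp_def
  proof (intro conjI ballI impI)
    show "u0' \<in> nodes ?T" using vd unfolding valid_disp_def u0'_def swap_nodes by blast
    show "disp' u0' = (0, 0)" using vd unfolding valid_disp_def u0'_def disp'_def by simp
  next
    fix u v assume u: "u \<in> nodes ?T" and v: "v \<in> nodes ?T" and e: "{u, v} \<in> edges ?T"
    have u1: "?sw u \<in> nodes T" using u unfolding swap_nodes sw_mem .
    have v1: "?sw v \<in> nodes T" using v unfolding swap_nodes sw_mem .
    have e1: "{?sw u, ?sw v} \<in> edges T" using e unfolding swap_edge_mem .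
    have h: "padd (disp (?sw v)) (pneg (disp (?sw u))) =
      (if elong T Ops d (?sw u) (?sw v) then d else if elong T Ops d (?sw v) (?sw u) then pneg d else (0, 0))"
      using vd u1 v1 e1 unfolding valid_disp_def by blast
    have "padd (disp' v) (pneg (disp' u)) = ?sw (padd (disp (?sw v)) (pneg (disp (?sw u))))"
      unfolding disp'_def by (simp add: swap_padd swap_pneg)
    also have "\<dots> = (if elong ?T Ops' d' u v then d' else if elong ?T Ops' d' v u then pneg d' else (0, 0))"
      unfolding h el by (simp add: swap_pneg d'_def)
    finally show "padd (disp' v) (pneg (disp' u)) =
      (if elong ?T Ops' d' u v then d' else if elong ?T Ops' d' v u then pneg d' else (0, 0))" .
  qed
  have D: "collision_free ?T Ops' d' disp'"
    unfolding collision_free_def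
  proof (intro allI impI)
    fix \<tau> :: real assume tau: "0 < \<tau> \<and> \<tau> \<le> 1"
    let ?A = "Inl ` nodes T \<union> Inr ` Ops"
    let ?m = "map_sum ?sw ?sw"
    have inj0: "inj_on (\<lambda>x. traj disp d x \<tau>) ?A" using cf tau unfolding collision_free_def by blast
    have dom: "Inl ` nodes ?T \<union> Inr ` Ops' = ?m ` ?A"
      unfolding swap_nodes Ops'_def by (auto simp: image_image image_Un)
    have tt: "traj disp' d' (?m x) \<tau> = prod.swap (traj disp d x \<tau>)" for x
      by (cases x) (simp_all add: traj_def disp'_def d'_def)
    have "inj_on ((\<lambda>x. traj disp' d' x \<tau>) \<circ> ?m) ?A"
    proof (rule inj_onI)
      fix x y assume xA: "x \<in> ?A" and yA: "y \<in> ?A"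
        and "((\<lambda>x. traj disp' d' x \<tau>) \<circ> ?m) x = ((\<lambda>x. traj disp' d' x \<tau>) \<circ> ?m) y"
      then have "prod.swap (traj disp d x \<tau>) = prod.swap (traj disp d y \<tau>)"
        by (simp only: comp_def tt)
      then have "traj disp d x \<tau> = traj disp d y \<tau>" by (metis swap_swap)
      then show "x = y" using inj_onD[OF inj0 _ xA yA] by blast
    qed
    then have "inj_on (\<lambda>x. traj disp' d' x \<tau>) (?m ` ?A)" by (rule inj_on_imageI)
    then show "inj_on (\<lambda>x. traj disp' d' x \<tau>) (Inl ` nodes ?T \<union> Inr ` Ops')" using dom by simp
  qed
  define f where "f a = padd a (disp a)" for a
  define f' where "f' a = padd a (disp' a)" for a
  have fsw: "f' (?sw a) = ?sw (f a)" for a unfolding f_def f'_def disp'_def by (simp add: swap_padd)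
  have nsw: "padd (f' (?sw a)) d' = ?sw (padd (f a) d)" for a unfolding fsw d'_def by (simp add: swap_padd)
  have E: "step_result ?T Ops' d' disp' = swap_shape (step_result T Ops d disp)"
  proof -
    have n1: "f' ` nodes ?T = ?sw ` f ` nodes T" unfolding swap_nodes image_image fsw ..
    have n2: "(\<lambda>u. padd (f' u) d') ` Ops' = ?sw ` (\<lambda>u. padd (f u) d) ` Ops"
      unfolding Ops'_def image_image nsw ..
    let ?E1 = "{{f u, f v} | u v. u \<in> nodes T \<and> v \<in> nodes T \<and> {u, v} \<in> edges T \<and>
                          \<not> elong T Ops d u v \<and> \<not> elong T Ops d v u}"
    let ?E2 = "{{f u, padd (f u) d} | u. u \<in> Ops}"
    let ?E3 = "{{padd (f u) d, f (padd u d)} | u. u \<in> Ops \<and> {u, padd u d} \<in> edges T}"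
    let ?F1 = "{{f' u, f' v} | u v. u \<in> nodes ?T \<and> v \<in> nodes ?T \<and> {u, v} \<in> edges ?T \<and>
                          \<not> elong ?T Ops' d' u v \<and> \<not> elong ?T Ops' d' v u}"
    let ?F2 = "{{f' u, padd (f' u) d'} | u. u \<in> Ops'}"
    let ?F3 = "{{padd (f' u) d', f' (padd u d')} | u. u \<in> Ops' \<and> {u, padd u d'} \<in> edges ?T}"
    have pd: "padd (?sw u) d' = ?sw (padd u d)" for u unfolding d'_def by (simp add: swap_padd)
    have e1: "?F1 = (\<lambda>e. ?sw ` e) ` ?E1"
    proof (rule set_eqI, rule iffI)
      fix e assume "e \<in> ?F1"
      then obtain u v where e: "e = {f' u, f' v}" and c: "u \<in> nodes ?T" "v \<in> nodes ?T" "{u, v} \<in> edges ?T"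
        "\<not> elong ?T Ops' d' u v" "\<not> elong ?T Ops' d' v u" by blast
      have c2: "?sw u \<in> nodes T" "?sw v \<in> nodes T" "{?sw u, ?sw v} \<in> edges T"
        "\<not> elong T Ops d (?sw u) (?sw v)" "\<not> elong T Ops d (?sw v) (?sw u)"
        using c unfolding swap_nodes sw_mem swap_edge_mem el by auto
      have "e = ?sw ` {f (?sw u), f (?sw v)}" using e fsw[of "?sw u"] fsw[of "?sw v"] by simp
      moreover have "{f (?sw u), f (?sw v)} \<in> ?E1" using c2 by blast
      ultimately show "e \<in> (\<lambda>e. ?sw ` e) ` ?E1" by blast
    next
      fix e assume "e \<in> (\<lambda>e. ?sw ` e) ` ?E1"
      then obtain u v where e: "e = ?sw ` {f u, f v}" and c: "u \<in> nodes T" "v \<in> nodes T" "{u, v} \<in> edges T"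
        "\<not> elong T Ops d u v" "\<not> elong T Ops d v u" by blast
      have c2: "?sw u \<in> nodes ?T" "?sw v \<in> nodes ?T" "{?sw u, ?sw v} \<in> edges ?T"
        "\<not> elong ?T Ops' d' (?sw u) (?sw v)" "\<not> elong ?T Ops' d' (?sw v) (?sw u)"
        using c unfolding swap_nodes sw_mem swap_edge_mem el by auto
      have "e = {f' (?sw u), f' (?sw v)}" using e fsw by simp
      then show "e \<in> ?F1" using c2 by blast
    qed
    have e2: "?F2 = (\<lambda>e. ?sw ` e) ` ?E2"
    proof (rule set_eqI, rule iffI)
      fix e assume "e \<in> ?F2"
      then obtain u where e: "e = {f' u, padd (f' u) d'}" and c: "u \<in> Ops'" by blast
      have c2: "?sw u \<in> Ops" using c unfolding Ops'_def sw_mem .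
      have "e = ?sw ` {f (?sw u), padd (f (?sw u)) d}" using e fsw[of "?sw u"] nsw[of "?sw u"] by simp
      moreover have "{f (?sw u), padd (f (?sw u)) d} \<in> ?E2" using c2 by blast
      ultimately show "e \<in> (\<lambda>e. ?sw ` e) ` ?E2" by blast
    next
      fix e assume "e \<in> (\<lambda>e. ?sw ` e) ` ?E2"
      then obtain u where e: "e = ?sw ` {f u, padd (f u) d}" and c: "u \<in> Ops" by blast
      have c2: "?sw u \<in> Ops'" using c unfolding Ops'_def sw_mem by simp
      have "e = {f' (?sw u), padd (f' (?sw u)) d'}" using e fsw nsw by simp
      then show "e \<in> ?F2" using c2 by blast
    qed
    have e3: "?F3 = (\<lambda>e. ?sw ` e) ` ?E3"
    proof (rule set_eqI, rule iffI)
      fix e assume "e \<in> ?F3"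
      then obtain u where e: "e = {padd (f' u) d', f' (padd u d')}" and c: "u \<in> Ops'" "{u, padd u d'} \<in> edges ?T" by blast
      have pu: "padd u d' = ?sw (padd (?sw u) d)" using pd[of "?sw u"] by simp
      have c2: "?sw u \<in> Ops" "{?sw u, padd (?sw u) d} \<in> edges T"
        using c unfolding Ops'_def sw_mem swap_edge_mem pu by auto
      have "e = ?sw ` {padd (f (?sw u)) d, f (padd (?sw u) d)}"
        using e fsw nsw[of "?sw u"] pu by simp
      moreover have "{padd (f (?sw u)) d, f (padd (?sw u) d)} \<in> ?E3" using c2 by blast
      ultimately show "e \<in> (\<lambda>e. ?sw ` e) ` ?E3" by blast
    next
      fix e assume "e \<in> (\<lambda>e. ?sw ` e) ` ?E3"
      then obtain u where e: "e = ?sw ` {padd (f u) d, f (padd u d)}" and c: "u \<in> Ops" "{u, padd u d} \<in> edges T" by blast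
      have c2: "?sw u \<in> Ops'" "{?sw u, padd (?sw u) d'} \<in> edges ?T"
        using c unfolding Ops'_def sw_mem swap_edge_mem pd by auto
      have "e = {padd (f' (?sw u)) d', f' (padd (?sw u) d')}" using e fsw nsw pd by simp
      then show "e \<in> ?F3" using c2 by blast
    qed
    have L: "step_result ?T Ops' d' disp' = (f' ` nodes ?T \<union> (\<lambda>u. padd (f' u) d') ` Ops', ?F1 \<union> ?F2 \<union> ?F3)"
      unfolding step_result_def Let_def f'_def by simp
    have R: "step_result T Ops d disp = (f ` nodes T \<union> (\<lambda>u. padd (f u) d) ` Ops, ?E1 \<union> ?E2 \<union> ?E3)"
      unfolding step_result_def Let_def f_def by simp
    have sp: "swap_shape (a, b) = (prod.swap ` a, (\<lambda>e. prod.swap ` e) ` b)" for a b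
      by (simp add: swap_shape_def nodes_def edges_def)
    show ?thesis unfolding L R sp by (simp only: image_Un n1 n2 e1 e2 e3)
  qed
  have E': "swap_shape T' = step_result ?T Ops' d' disp'" using E T' by simp
  show ?thesis unfolding growth_step_def
    apply (rule exI[of _ Ops'], rule exI[of _ d'], rule exI[of _ u0'], rule exI[of _ disp'])
    by (intro conjI A B C D E')
qed

section \<open>Stage sets\<close>

definition stg :: "int set \<Rightarrow> nat \<Rightarrow> int set" where
  "stg C k = {sorted_list_of_set C ! i | i. i < card C \<and> \<not> 2 ^ k dvd (i + 1)}"

lemma cs_facts:
  assumes "finite C"
  shows "length (sorted_list_of_set C) = card C" "set (sorted_list_of_set C) = C"
    "distinct (sorted_list_of_set C)" "sorted_wrt (<) (sorted_list_of_set C)"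
  using assms by (simp_all add: length_sorted_list_of_set set_sorted_list_of_set
      distinct_sorted_list_of_set strict_sorted_list_of_set)

lemma cs_less:
  assumes f: "finite C" and i: "i < card C" and j: "j < card C"
  shows "sorted_list_of_set C ! i < sorted_list_of_set C ! j \<longleftrightarrow> i < j"
proof -
  let ?cs = "sorted_list_of_set C"
  have s: "sorted_wrt (<) ?cs" and l: "length ?cs = card C" using cs_facts[OF f] by auto
  show ?thesis
  proof
    assume lt: "?cs ! i < ?cs ! j"
    show "i < j"
    proof (rule ccontr)
      assume "\<not> i < j"
      then consider "j < i" | "j = i" by linarith
      then show False
      proof cases
        case 1 then have "?cs ! j < ?cs ! i" using sorted_wrt_nth_less[OF s 1] i l by simp
        then show False using lt by simp
      next
        case 2 then show False using lt by simp
      qed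
    qed
  next
    assume "i < j"
    then show "?cs ! i < ?cs ! j" using sorted_wrt_nth_less[OF s] j l by simp
  qed
qed

lemma cs_inj:
  assumes f: "finite C" and i: "i < card C" and j: "j < card C"
    and e: "sorted_list_of_set C ! i = sorted_list_of_set C ! j"
  shows "i = j"
  using nth_eq_iff_index_eq[OF cs_facts(3)[OF f]] cs_facts(1)[OF f] i j e by simp

lemma stg_sub: "finite C \<Longrightarrow> stg C k \<subseteq> C"
proof
  fix c assume f: "finite C" and "c \<in> stg C k"
  then obtain i where i: "i < card C" "c = sorted_list_of_set C ! i" unfolding stg_def by blast
  have "i < length (sorted_list_of_set C)" using i cs_facts(1)[OF f] by simp
  then have "c \<in> set (sorted_list_of_set C)" using i(2) nth_mem by blast
  then show "c \<in> C" using cs_facts(2)[OF f] by simp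
qed

lemma stg_0: "stg C 0 = {}"
  unfolding stg_def by simp

lemma stg_full:
  assumes f: "finite C" and K: "card C < 2 ^ K"
  shows "stg C K = C"
proof
  show "stg C K \<subseteq> C" by (rule stg_sub[OF f])
next
  show "C \<subseteq> stg C K"
  proof
    fix c assume "c \<in> C"
    then have "c \<in> set (sorted_list_of_set C)" using cs_facts(2)[OF f] by simp
    then obtain i where i: "i < card C" "c = sorted_list_of_set C ! i"
      using cs_facts(1)[OF f] by (auto simp: in_set_conv_nth)
    have "\<not> 2 ^ K dvd (i + 1)"
    proof
      assume "2 ^ K dvd (i + 1)"
      then have "2 ^ K \<le> i + 1" by (rule dvd_imp_le) simp
      then show False using i K by simp
    qed
    then show "c \<in> stg C K" unfolding stg_def using i by blast
  qed
qed

lemma stg_mono: "stg C k \<subseteq> stg C (Suc k)"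
proof
  fix c assume "c \<in> stg C k"
  then obtain i where i: "i < card C" "\<not> 2 ^ k dvd (i + 1)" "c = sorted_list_of_set C ! i"
    unfolding stg_def by blast
  have "\<not> 2 ^ Suc k dvd (i + 1)"
  proof
    assume "2 ^ Suc k dvd (i + 1)"
    moreover have "(2::nat) ^ k dvd 2 ^ Suc k" by (rule le_imp_power_dvd) simp
    ultimately show False using i(2) dvd_trans by blast
  qed
  then show "c \<in> stg C (Suc k)" unfolding stg_def using i by blast
qed

lemma stg_idx:
  assumes f: "finite C" and c: "c \<in> stg C (Suc k) - stg C k"
  obtains i where "i < card C" "c = sorted_list_of_set C ! i" "\<not> 2 ^ Suc k dvd (i + 1)" "2 ^ k dvd (i + 1)"
proof -
  from c obtain i where i: "i < card C" "\<not> 2 ^ Suc k dvd (i + 1)" "c = sorted_list_of_set C ! i"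
    unfolding stg_def by blast
  have "2 ^ k dvd (i + 1)"
  proof (rule ccontr)
    assume "\<not> 2 ^ k dvd (i + 1)"
    then have "c \<in> stg C k" unfolding stg_def using i by blast
    then show False using c by blast
  qed
  then show ?thesis using that i by blast
qed

lemma odd_part:
  assumes "\<not> 2 ^ Suc k dvd (n::nat)" "2 ^ k dvd n"
  obtains a where "n = 2 ^ k * a" "odd a"
proof -
  from assms(2) obtain a where a: "n = 2 ^ k * a" by (auto elim: dvdE)
  have "odd a"
  proof
    assume "even a"
    then obtain b where "a = 2 * b" by (rule evenE)
    then have "n = 2 ^ Suc k * b" using a by simp
    then show False using assms(1) by simp
  qed
  then show ?thesis using that a by blast
qed

lemma stg_sep:
  assumes f: "finite C" and z: "z \<in> stg C (Suc k) - stg C k" and z': "z' \<in> stg C (Suc k) - stg C k"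
    and lt: "z < z'"
  shows "\<exists>x. z < x \<and> x < z' \<and> x \<notin> stg C (Suc k)"
proof -
  let ?cs = "sorted_list_of_set C"
  obtain i where i: "i < card C" "z = ?cs ! i" "\<not> 2 ^ Suc k dvd (i + 1)" "2 ^ k dvd (i + 1)"
    using stg_idx[OF f z] by blast
  obtain i' where i': "i' < card C" "z' = ?cs ! i'" "\<not> 2 ^ Suc k dvd (i' + 1)" "2 ^ k dvd (i' + 1)"
    using stg_idx[OF f z'] by blast
  obtain a where a: "i + 1 = 2 ^ k * a" "odd a" using odd_part[OF i(3) i(4)] by blast
  obtain b where b: "i' + 1 = 2 ^ k * b" "odd b" using odd_part[OF i'(3) i'(4)] by blast
  have ii: "i < i'" using cs_less[OF f i(1) i'(1)] i(2) i'(2) lt by simp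
  have pk: "(0::nat) < 2 ^ k" by simp
  have ab: "a < b"
  proof -
    have "2 ^ k * a < 2 ^ k * b" using a(1) b(1) ii by linarith
    then show ?thesis using pk by simp
  qed
  have ab2: "a + 1 < b"
  proof -
    have "b \<noteq> a + 1" using a(2) b(2) by auto
    then show ?thesis using ab by linarith
  qed
  define j where "j = i + 2 ^ k"
  have j1: "j + 1 = 2 ^ k * (a + 1)" using a(1) unfolding j_def by (simp add: algebra_simps)
  have jdvd: "2 ^ Suc k dvd (j + 1)"
  proof -
    from a(2) have "even (a + 1)" by simp
    then obtain c where "a + 1 = 2 * c" by (rule evenE)
    then have "j + 1 = 2 ^ Suc k * c" using j1 by simp
    then show ?thesis by simp
  qed
  have ij: "i < j" unfolding j_def using pk by simp
  have ji: "j < i'"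
  proof -
    have "2 ^ k * (a + 1) < 2 ^ k * b" by (rule mult_strict_left_mono[OF ab2 pk])
    then show ?thesis using j1 b(1) by linarith
  qed
  have jc: "j < card C" using ji i'(1) by simp
  let ?x = "?cs ! j"
  have "z < ?x" using cs_less[OF f i(1) jc] ij i(2) by simp
  moreover have "?x < z'" using cs_less[OF f jc i'(1)] ji i'(2) by simp
  moreover have "?x \<notin> stg C (Suc k)"
  proof
    assume "?x \<in> stg C (Suc k)"
    then obtain j' where j': "j' < card C" "\<not> 2 ^ Suc k dvd (j' + 1)" "?x = ?cs ! j'"
      unfolding stg_def by blast
    have "j' = j" using cs_inj[OF f j'(1) jc] j'(3) by simp
    then show False using j'(2) jdvd by simp
  qed
  ultimately show ?thesis by blast
qed

definition steps :: "shape \<Rightarrow> shape \<Rightarrow> nat \<Rightarrow> bool" where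
  "steps A B t \<longleftrightarrow> (\<exists>seq. seq 0 = A \<and> seq t = B \<and> (\<forall>k<t. growth_step (seq k) (seq (Suc k))))"

lemma steps_refl: "steps A A 0"
  unfolding steps_def by (rule exI[of _ "\<lambda>_. A"]) simp

lemma steps_one: "growth_step A B \<Longrightarrow> steps A B 1"
  unfolding steps_def by (rule exI[of _ "\<lambda>k. if k = 0 then A else B"]) simp

lemma steps_trans:
  assumes "steps A B t" "steps B C s"
  shows "steps A C (t + s)"
proof -
  obtain f where f: "f 0 = A" "f t = B" "\<forall>k<t. growth_step (f k) (f (Suc k))" using assms(1) unfolding steps_def by blast
  obtain g where g: "g 0 = B" "g s = C" "\<forall>k<s. growth_step (g k) (g (Suc k))" using assms(2) unfolding steps_def by blast
  define h where "h k = (if k \<le> t then f k else g (k - t))" for k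
  have "h 0 = A" using f by (simp add: h_def)
  moreover have "h (t + s) = C" using f g by (cases "s = 0") (auto simp: h_def)
  moreover have "\<forall>k<t + s. growth_step (h k) (h (Suc k))"
  proof (intro allI impI)
    fix k assume k: "k < t + s"
    show "growth_step (h k) (h (Suc k))"
    proof (cases "k < t")
      case True
      then have "h k = f k" "h (Suc k) = f (Suc k)" by (simp_all add: h_def)
      then show ?thesis using f(3) True by simp
    next
      case False
      then have ks: "k - t < s" using k by simp
      have "h k = g (k - t)"
      proof (cases "k = t")
        case True then show ?thesis using f(2) g(1) by (simp add: h_def)
      next
        case False then show ?thesis using \<open>\<not> k < t\<close> by (simp add: h_def)
      qed
      moreover have "h (Suc k) = g (Suc (k - t))" using False by (simp add: h_def Suc_diff_le)
      ultimately show ?thesis using g(3) ks by simp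
    qed
  qed
  ultimately show ?thesis unfolding steps_def by blast
qed

lemma steps_swap: "steps A B t \<Longrightarrow> steps (swap_shape A) (swap_shape B) t"
  unfolding steps_def
proof -
  assume "\<exists>seq. seq 0 = A \<and> seq t = B \<and> (\<forall>k<t. growth_step (seq k) (seq (Suc k)))"
  then obtain f where f: "f 0 = A" "f t = B" "\<forall>k<t. growth_step (f k) (f (Suc k))" by blast
  show "\<exists>seq. seq 0 = swap_shape A \<and> seq t = swap_shape B \<and> (\<forall>k<t. growth_step (seq k) (seq (Suc k)))"
  proof (intro exI[of _ "\<lambda>k. swap_shape (f k)"] conjI)
    show "\<forall>k<t. growth_step (swap_shape (f k)) (swap_shape (f (Suc k)))"
      using f(3) swap_growth by blast
  qed (use f in simp_all)
qed

lemma translate_0: "translate (0, 0) B = B"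
proof -
  have i: "padd (0, 0) = id" by (rule ext) (simp add: padd_def)
  show ?thesis unfolding translate_def i by (simp add: nodes_def edges_def)
qed

lemma grows_of_steps: "steps A B t \<Longrightarrow> grows_in A B t"
proof -
  assume "steps A B t"
  then obtain f where f: "f 0 = A" "f t = B" "\<forall>k<t. growth_step (f k) (f (Suc k))" unfolding steps_def by blast
  have "same_shape (f t) B" unfolding same_shape_def f(2) using translate_0[of B] by metis
  then show ?thesis unfolding grows_in_def using f(1,3) by blast
qed

section \<open>Column phase\<close>

lemma del_empty:
  assumes g: "good S"
  shows "del S {} = S"
proof -
  have shid: "sh {} = id" by (rule ext) (simp add: sh_def sig_def)
  have n: "nodes (del S {}) = nodes S" by (simp add: del_nodes shid)
  have e: "edges (del S {}) = edges S"
  proof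
    show "edges (del S {}) \<subseteq> edges S"
    proof
      fix e assume "e \<in> edges (del S {})"
      then obtain a b where e: "e = {a, b}" and h: "({a, b} \<in> edges S \<and> fst a = fst b) \<or> pathD S {} a b"
        unfolding del_edges_char[OF g] shid by auto
      show "e \<in> edges S"
      proof (cases "pathD S {} a b")
        case False then show ?thesis using h e by blast
      next
        case True
        then have ab: "snd a = snd b" "fst a < fst b" "\<forall>x. fst a < x \<and> x < fst b \<longrightarrow> False"
          "{(fst a, snd a), (fst a + 1, snd a)} \<in> edges S" unfolding pathD_def by auto
        have "fst b = fst a + 1"
        proof (rule ccontr)
          assume "fst b \<noteq> fst a + 1"
          then show False using ab(2) ab(3)[rule_format, of "fst a + 1"] by simp
        qed
        then have "b = (fst a + 1, snd a)" using ab(1) by (simp add: prod_eq_iff)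
        then show ?thesis using ab(4) e by simp
      qed
    qed
  next
    show "edges S \<subseteq> edges (del S {})"
    proof
      fix e assume e: "e \<in> edges S"
      then obtain p q where pq: "e = {p, q}" "p \<in> nodes S" "q \<in> nodes S" using g unfolding good_def by blast
      have "{sh {} p, sh {} q} \<in> edges (del S {})"
        unfolding del_def Let_def edges_def snd_conv
        apply (rule CollectI, rule exI[of _ p], rule exI[of _ q])
        using pq e by (simp add: edges_def)
      then show "e \<in> edges (del S {})" using pq by (simp add: shid)
    qed
  qed
  show ?thesis using n e by (metis edges_def nodes_def prod.collapse)
qed

lemma good_step:
  assumes g: "good S" and Kf: "finite C" and CC: "C = ccols S"
  shows "growth_step (del S (stg C (Suc k))) (del S (stg C k))"
proof -
  have DC: "stg C (Suc k) \<subseteq> ccols S" using stg_sub[OF Kf] CC by blast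
  interpret st: stage S "stg C (Suc k)" "stg C (Suc k) - stg C k"
  proof
    show "good S" by (rule g)
    show "stg C (Suc k) \<subseteq> ccols S" by (rule DC)
    show "stg C (Suc k) - stg C k \<subseteq> stg C (Suc k)" by blast
    show "\<exists>x. z < x \<and> x < z' \<and> x \<notin> stg C (Suc k)"
      if "z \<in> stg C (Suc k) - stg C k" "z' \<in> stg C (Suc k) - stg C k" "z < z'" for z z'
      using stg_sep[OF Kf that] .
  qed
  have D': "st.D' = stg C k" unfolding st.D'_def using stg_mono[of C k] by blast
  obtain u0 where u0: "u0 \<in> nodes st.T" "\<forall>t\<in>st.X. fst u0 \<le> t" using st.anchor by blast
  have gT: "good st.T" unfolding st.T_def by (rule good_del[OF g DC])
  have wf: "\<forall>e\<in>edges st.T. \<exists>p q. e = {p, q} \<and> p \<in> nodes st.T \<and> q \<in> nodes st.T \<and> grid_adj p q"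
    using gT unfolding good_def by blast
  have "growth_step st.T (step_result st.T st.Ops (1, 0) st.disp)"
    by (rule step_gen[OF wf st.fX u0]) (simp_all add: st.disp_def st.hh_def st.Ops_def)
  then show ?thesis using st.stage_result D' unfolding st.T_def by simp
qed

lemma col_phase:
  assumes g: "good S" and K: "card (ccols S) < 2 ^ K"
  shows "steps (del S (ccols S)) S K"
proof -
  let ?C = "ccols S"
  have f: "finite ?C" by (rule ccols_finite[OF g])
  have "steps (del S (stg ?C k)) (del S (stg ?C 0)) k" for k
  proof (induction k)
    case 0 then show ?case by (rule steps_refl)
  next
    case (Suc k)
    have "steps (del S (stg ?C (Suc k))) (del S (stg ?C k)) 1"
      by (rule steps_one[OF good_step[OF g f refl]])
    from steps_trans[OF this Suc.IH] show ?case by simp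
  qed
  then have "steps (del S (stg ?C K)) (del S (stg ?C 0)) K" .
  then show ?thesis unfolding stg_full[OF f K] stg_0 del_empty[OF g] .
qed

lemma compress_cols_del: "compress_cols S = del S (ccols S)"
proof -
  have cs: "col_shift S = sh (ccols S)"
    by (rule ext) (simp add: col_shift_def sh_def sig_def ccols_def conj_commute)
  show ?thesis unfolding compress_cols_def del_def cs Let_def pathD_def
    by (simp add: ccols_def)
qed

lemma good_swap:
  assumes g: "good T"
  shows "good (swap_shape T)"
proof -
  have A: "finite (nodes (swap_shape T))" "nodes (swap_shape T) \<noteq> {}"
    using g unfolding good_def swap_nodes by auto
  have B: "\<forall>e\<in>edges (swap_shape T). \<exists>p q. e = {p, q} \<and> p \<in> nodes (swap_shape T) \<and> q \<in> nodes (swap_shape T) \<and> grid_adj p q"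
  proof
    fix e assume "e \<in> edges (swap_shape T)"
    then obtain e0 where e0: "e0 \<in> edges T" "e = prod.swap ` e0" unfolding swap_edges by blast
    then obtain p q where pq: "e0 = {p, q}" "p \<in> nodes T" "q \<in> nodes T" "grid_adj p q" using g unfolding good_def by blast
    have "e = {prod.swap p, prod.swap q}" using e0 pq by simp
    moreover have "prod.swap p \<in> nodes (swap_shape T)" "prod.swap q \<in> nodes (swap_shape T)" using pq unfolding swap_nodes by auto
    moreover have "grid_adj (prod.swap p) (prod.swap q)" using pq(4) by (simp add: grid_adj_def add.commute)
    ultimately show "\<exists>p q. e = {p, q} \<and> p \<in> nodes (swap_shape T) \<and> q \<in> nodes (swap_shape T) \<and> grid_adj p q" by blast
  qed
  have C: "\<forall>p\<in>nodes (swap_shape T). \<exists>q. {p, q} \<in> edges (swap_shape T)"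
  proof
    fix p assume "p \<in> nodes (swap_shape T)"
    then have "prod.swap p \<in> nodes T" unfolding swap_nodes sw_mem .
    then obtain q where "{prod.swap p, q} \<in> edges T" using g unfolding good_def by blast
    then have "{p, prod.swap q} \<in> edges (swap_shape T)" unfolding swap_edge_mem by simp
    then show "\<exists>q. {p, q} \<in> edges (swap_shape T)" by blast
  qed
  show ?thesis unfolding good_def by (rule conjI[OF A(1) conjI[OF A(2) conjI[OF B C]]])
qed

lemma swap_swap_shape: "swap_shape (swap_shape T) = T"
  by (simp add: swap_shape_def nodes_def edges_def image_image)

lemma card_ccols: "good S \<Longrightarrow> card (ccols S) \<le> card (nodes S)"
proof -
  assume g: "good S"
  have "ccols S \<subseteq> fst ` nodes S" by (force simp: ccols_def compressible_col_def)
  then have "card (ccols S) \<le> card (fst ` nodes S)" using g by (intro card_mono) (auto simp: good_def)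
  also have "\<dots> \<le> card (nodes S)" by (rule card_image_le) (use g in \<open>simp add: good_def\<close>)
  finally show ?thesis .
qed

lemma card_del: "good S \<Longrightarrow> card (nodes (del S D)) \<le> card (nodes S)"
proof -
  assume g: "good S"
  have "card (nodes (del S D)) \<le> card {p \<in> nodes S. fst p \<notin> D}"
    unfolding del_nodes by (rule card_image_le) (use g in \<open>simp add: good_def\<close>)
  also have "\<dots> \<le> card (nodes S)" using g by (intro card_mono) (auto simp: good_def)
  finally show ?thesis .
qed

lemma card_swap: "card (nodes (swap_shape T)) = card (nodes T)"
  unfolding swap_nodes by (rule card_image) (unfold inj_on_def, metis swap_swap)

lemma main_steps:
  assumes g: "good S" and K: "card (nodes S) < 2 ^ K"
  shows "steps (incompressible_of S) S (K + K)"
proof -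
  let ?R = "compress_cols S"
  have R: "?R = del S (ccols S)" by (rule compress_cols_del)
  have gR: "good ?R" unfolding R by (rule good_del[OF g]) simp
  have s1: "steps ?R S K" unfolding R using col_phase[OF g] card_ccols[OF g] K by simp
  have gSR: "good (swap_shape ?R)" by (rule good_swap[OF gR])
  have "card (ccols (swap_shape ?R)) \<le> card (nodes (swap_shape ?R))" by (rule card_ccols[OF gSR])
  also have "\<dots> = card (nodes ?R)" by (rule card_swap)
  also have "\<dots> \<le> card (nodes S)" unfolding R by (rule card_del[OF g])
  finally have cK: "card (ccols (swap_shape ?R)) < 2 ^ K" using K by simp
  have "steps (del (swap_shape ?R) (ccols (swap_shape ?R))) (swap_shape ?R) K"
    by (rule col_phase[OF gSR cK])
  then have "steps (swap_shape (del (swap_shape ?R) (ccols (swap_shape ?R)))) (swap_shape (swap_shape ?R)) K"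
    by (rule steps_swap)
  then have s2: "steps (incompressible_of S) ?R K"
    unfolding swap_swap_shape incompressible_of_def compress_rows_def compress_cols_del[of "swap_shape ?R"] .
  show ?thesis using steps_trans[OF s2 s1] .
qed

lemma good_of_shape:
  assumes s: "is_shape S" and n: "card (nodes S) \<ge> 2"
  shows "good S"
proof -
  have fin: "finite (nodes S)" and ne: "nodes S \<noteq> {}"
    and ed: "\<forall>e\<in>edges S. \<exists>p q. e = {p, q} \<and> p \<in> nodes S \<and> q \<in> nodes S \<and> grid_adj p q"
    and con: "\<forall>p\<in>nodes S. \<forall>q\<in>nodes S. (p, q) \<in> {(a, b). {a, b} \<in> edges S}\<^sup>*"
    using s unfolding is_shape_def by blast+
  have "\<forall>p\<in>nodes S. \<exists>q. {p, q} \<in> edges S"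
  proof
    fix p assume p: "p \<in> nodes S"
    obtain q where q: "q \<in> nodes S" "q \<noteq> p"
    proof -
      have "\<not> nodes S \<subseteq> {p}"
      proof
        assume "nodes S \<subseteq> {p}"
        then have "card (nodes S) \<le> card {p}" by (rule card_mono[rotated]) simp
        then show False using n by simp
      qed
      then show ?thesis using that by blast
    qed
    have "(p, q) \<in> {(a, b). {a, b} \<in> edges S}\<^sup>*" using con p q(1) by blast
    then show "\<exists>q. {p, q} \<in> edges S"
    proof (cases rule: converse_rtranclE)
      case base then show ?thesis using q(2) by simp
    next
      case (step p') then show ?thesis by blast
    qed
  qed
  then show ?thesis unfolding good_def using fin ne ed by blast
qed

theorem lemma3p1:
  "\<exists>c::real. \<forall>S::shape. is_shape S \<and> card (nodes S) \<ge> 2 \<longrightarrow>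
     (\<exists>t::nat. grows_in (incompressible_of S) S t \<and> real t \<le> c * log 2 (real (card (nodes S))))"
proof (rule exI[of _ "4::real"], intro allI impI)
  fix S :: shape
  assume a: "is_shape S \<and> card (nodes S) \<ge> 2"
  let ?n = "card (nodes S)"
  have g: "good S" using good_of_shape a by blast
  define L where "L = log 2 (real ?n)"
  have L1: "1 \<le> L" unfolding L_def using a by (simp add: le_log_iff)
  define K where "K = nat \<lfloor>L\<rfloor> + 1"
  have fl: "0 \<le> \<lfloor>L\<rfloor>" using L1 by simp
  have KL: "real K = real_of_int \<lfloor>L\<rfloor> + 1" unfolding K_def using fl by simp
  have "real ?n = 2 powr L" unfolding L_def using a by simp
  also have "\<dots> < 2 powr (real K)" using KL by (intro powr_less_mono) linarith+
  also have "\<dots> = 2 ^ K" by (simp add: powr_realpow)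
  finally have "real ?n < 2 ^ K" .
  then have nK: "?n < 2 ^ K" by (metis of_nat_less_iff of_nat_numeral of_nat_power)
  have st: "steps (incompressible_of S) S (K + K)" by (rule main_steps[OF g nK])
  have "real (K + K) \<le> 4 * L"
  proof -
    have f1: "real_of_int \<lfloor>L\<rfloor> \<le> L" by simp
    have "real (K + K) = 2 * real K" by simp
    then show ?thesis using KL L1 f1 by linarith
  qed
  then show "\<exists>t. grows_in (incompressible_of S) S t \<and> real t \<le> 4 * log 2 (real ?n)"
    using grows_of_steps[OF st] unfolding L_def by blast
qed

end
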